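(* Let $\Omega\subseteq\mathbb{R}^n$ be bounded and measurable, $Y$ a Hilbert space, $S:L^2(\Omega)\to Y$ linear and continuous, $z\in Y$, $u_a,u_b\in L^\infty(\Omega)$, $u_a\le u_b$, $U_{\mathrm{ad}}=\{u\in L^2(\Omega):u_a\le u\le u_b\text{ a.e.}\}$, and let $(S_h)_h$, $\delta$ be as in the context. Let $u^\dagger$ be a solution of $\min_{u\in U_{\mathrm{ad}}}\frac12\|Su-z\|_Y^2$ such that there exists $w\in Y$ with $u^\dagger=P_{U_{\mathrm{ad}}}(S^\ast w)$. Let $(\varepsilon_k)_k$ be positive reals with $\sum_{i=1}^\infty R_i<\infty$, where $R_i:=\frac{\varepsilon_i}{\alpha_i}+\frac{\varepsilon_i^2}{\alpha_i^2}+\frac{\gamma_{i-1}\varepsilon_i}{\alpha_i}+\frac{\varepsilon_i^2}{\alpha_i}$. Let $h_{\max}>0$, and for each $h$ let $(u_k^{\mathrm{in}})_k$ be generated by the inexact Bregman algorithm of the context. Then there exists a constant $C$ such that for every $0<h\le h_{\max}$ there exists a stopping index $k(h)$ with \[\sum_{i=1}^{k(h)}H_i\le C<\infty,\qquad H_i:=\delta(h)\Big[\frac{\rho_i}{\alpha_i}+\frac{\gamma_{i-1}}{\alpha_i}+\frac{\gamma_{i-1}\rho_i}{\alpha_i}\Big]+\delta(h)^2\Big[\frac{\rho_i^2}{\alpha_i^2}+\frac{\rho_i^2}{\alpha_i}\Big],\] and $k(h)\to\infty$ as $h\to0$. Furthermore $u_{k(h)}^{\mathrm{in}}\to u^\dagger$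 in $L^2(\Omega)$ as $h\to0$.
   Context: $\|\cdot\|$: $L^2(\Omega)$ norm; $P_{U_{\mathrm{ad}}}$: $L^2$-projection onto $U_{\mathrm{ad}}$. For each $h>0$, $S_h:L^2(\Omega)\to Y$ is linear continuous with finite-dimensional range, and there is a continuous, monotonically increasing $\delta:\mathbb{R}^+\to\mathbb{R}^+$, $\delta(0)=0$, with $\|(S-S_h)u_h\|_Y+\|(S^\ast-S_h^\ast)(S_hu_h-z)\|\le\delta(h)$ for all $h\ge0$, $u_h\in U_{\mathrm{ad}}$. $(\alpha_k)_k$ is a bounded sequence of positive reals, $\gamma_k:=\sum_{j=1}^k\alpha_j^{-1}$ ($\gamma_0=0$), $\rho_k:=\sqrt{\alpha_k^{-1}(1+\alpha_k^{-1})}$. $\mathcal B(\alpha,\lambda,u):=(1+\frac1\alpha)\|u-P_{U_{\mathrm{ad}}}(\frac1\alpha S_h^\ast(z-S_hu)+\lambda)\|$. Inexact Bregman algorithm: $u_0^{\mathrm{in}}=P_{U_{\mathrm{ad}}}(0)$, $\lambda_0^{\mathrm{in}}=0$; for $k\ge1$ find $u_k^{\mathrm{in}}\in U_{\mathrm{ad}}$ with $\mathcal B(\alpha_k,\lambda_{k-1}^{\mathrm{in}},u_k^{\mathrm{in}})\le\varepsilon_k$, then set $\lambda_k^{\mathrm{in}}=\sum_{i=1}^k\frac1{\alpha_i}S_h^\ast(z-S_hu_i^{\mathrm{in}})$. *)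

theory Defs
  imports "HOL-Analysis.Analysis"
begin

text \<open>L^2(Omega) is represented by square-integrable functions on Omega (representatives;
  all quantities below are invariant under a.e. equality).\<close>

definition L2 :: "'n::euclidean_space set \<Rightarrow> ('n \<Rightarrow> real) set" where
  "L2 \<Omega> = {f. f \<in> borel_measurable (lebesgue_on \<Omega>) \<and>
                 integrable (lebesgue_on \<Omega>) (\<lambda>x. (f x)\<^sup>2)}"

definition L2inner :: "'n::euclidean_space set \<Rightarrow> ('n \<Rightarrow> real) \<Rightarrow> ('n \<Rightarrow> real) \<Rightarrow> real" where
  "L2inner \<Omega> f g = integral\<^sup>L (lebesgue_on \<Omega>) (\<lambda>x. f x * g x)"

definition L2norm :: "'n::euclidean_space set \<Rightarrow> ('n \<Rightarrow> real) \<Rightarrow> real" where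
  "L2norm \<Omega> f = sqrt (integral\<^sup>L (lebesgue_on \<Omega>) (\<lambda>x. (f x)\<^sup>2))"

definition Linfty :: "'n::euclidean_space set \<Rightarrow> ('n \<Rightarrow> real) set" where
  "Linfty \<Omega> = {f. f \<in> borel_measurable (lebesgue_on \<Omega>) \<and>
                  (\<exists>B. AE x in lebesgue_on \<Omega>. \<bar>f x\<bar> \<le> B)}"

definition Uad :: "'n::euclidean_space set \<Rightarrow> ('n \<Rightarrow> real) \<Rightarrow> ('n \<Rightarrow> real) \<Rightarrow> ('n \<Rightarrow> real) set" where
  "Uad \<Omega> ua ub = {u \<in> L2 \<Omega>. AE x in lebesgue_on \<Omega>. ua x \<le> u x \<and> u x \<le> ub x}"

definition projU :: "'n::euclidean_space set \<Rightarrow> ('n \<Rightarrow> real) \<Rightarrow> ('n \<Rightarrow> real) \<Rightarrow> ('n \<Rightarrow> real) \<Rightarrow> ('n \<Rightarrow> real)" where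
  "projU \<Omega> ua ub v = (SOME p. p \<in> Uad \<Omega> ua ub \<and>
      (\<forall>q\<in>Uad \<Omega> ua ub. L2norm \<Omega> (\<lambda>x. p x - v x) \<le> L2norm \<Omega> (\<lambda>x. q x - v x)))"

definition bounded_linear_L2 :: "'n::euclidean_space set \<Rightarrow> (('n \<Rightarrow> real) \<Rightarrow> 'y::real_normed_vector) \<Rightarrow> bool" where
  "bounded_linear_L2 \<Omega> T \<longleftrightarrow>
     (\<forall>f\<in>L2 \<Omega>. \<forall>g\<in>L2 \<Omega>. \<forall>a b. T (\<lambda>x. a * f x + b * g x) = a *\<^sub>R T f + b *\<^sub>R T g) \<and>
     (\<exists>K. \<forall>f\<in>L2 \<Omega>. norm (T f) \<le> K * L2norm \<Omega> f)"

definition is_adjoint_L2 :: "'n::euclidean_space set \<Rightarrow> (('n \<Rightarrow> real) \<Rightarrow> 'y::real_inner) \<Rightarrow> ('y \<Rightarrow> ('n \<Rightarrow> real)) \<Rightarrow> bool" where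
  "is_adjoint_L2 \<Omega> T Tstar \<longleftrightarrow>
     (\<forall>y. Tstar y \<in> L2 \<Omega>) \<and> (\<forall>u\<in>L2 \<Omega>. \<forall>y. inner (T u) y = L2inner \<Omega> u (Tstar y))"

definition gammaB :: "(nat \<Rightarrow> real) \<Rightarrow> nat \<Rightarrow> real" where
  "gammaB \<alpha> k = (\<Sum>j=1..k. 1 / \<alpha> j)"

definition rhoB :: "(nat \<Rightarrow> real) \<Rightarrow> nat \<Rightarrow> real" where
  "rhoB \<alpha> k = sqrt ((1 / \<alpha> k) * (1 + 1 / \<alpha> k))"

definition breg :: "'n::euclidean_space set \<Rightarrow> ('n \<Rightarrow> real) \<Rightarrow> ('n \<Rightarrow> real) \<Rightarrow>
    (('n \<Rightarrow> real) \<Rightarrow> 'y::real_inner) \<Rightarrow> ('y \<Rightarrow> ('n \<Rightarrow> real)) \<Rightarrow> 'y \<Rightarrow>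
    real \<Rightarrow> ('n \<Rightarrow> real) \<Rightarrow> ('n \<Rightarrow> real) \<Rightarrow> real" where
  "breg \<Omega> ua ub Sh Shs z a lam u =
     (1 + 1 / a) * L2norm \<Omega> (\<lambda>x. u x -
        projU \<Omega> ua ub (\<lambda>x. (1 / a) * Shs (z - Sh u) x + lam x) x)"

definition lamB :: "(nat \<Rightarrow> real) \<Rightarrow> (('n \<Rightarrow> real) \<Rightarrow> 'y::real_inner) \<Rightarrow> ('y \<Rightarrow> ('n \<Rightarrow> real)) \<Rightarrow> 'y \<Rightarrow>
    (nat \<Rightarrow> ('n \<Rightarrow> real)) \<Rightarrow> nat \<Rightarrow> ('n \<Rightarrow> real)" where
  "lamB \<alpha> Sh Shs z u k = (\<lambda>x. \<Sum>i=1..k. (1 / \<alpha> i) * Shs (z - Sh (u i)) x)"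

end

theory Submission
  imports Defs
begin


lemma L2_meas: "f \<in> L2 \<Omega> \<Longrightarrow> f \<in> borel_measurable (lebesgue_on \<Omega>)"
  by (simp add: L2_def)
lemma L2_sq: "f \<in> L2 \<Omega> \<Longrightarrow> integrable (lebesgue_on \<Omega>) (\<lambda>x. (f x)\<^sup>2)"
  by (simp add: L2_def)

lemma L2_prod_int:
  assumes "f \<in> L2 \<Omega>" "g \<in> L2 \<Omega>"
  shows "integrable (lebesgue_on \<Omega>) (\<lambda>x. f x * g x)"
proof (rule Bochner_Integration.integrable_bound[of _ "\<lambda>x. (f x)\<^sup>2 + (g x)\<^sup>2"])
  show "integrable (lebesgue_on \<Omega>) (\<lambda>x. (f x)\<^sup>2 + (g x)\<^sup>2)"
    using assms by (intro Bochner_Integration.integrable_add L2_sq)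
  show "(\<lambda>x. f x * g x) \<in> borel_measurable (lebesgue_on \<Omega>)"
    using assms by (intro borel_measurable_times L2_meas)
  show "AE x in lebesgue_on \<Omega>. norm (f x * g x) \<le> norm ((f x)\<^sup>2 + (g x)\<^sup>2)"
  proof (intro AE_I2)
    fix x
    have "2 * \<bar>f x\<bar> * \<bar>g x\<bar> \<le> (f x)\<^sup>2 + (g x)\<^sup>2"
      using sum_squares_bound[of "\<bar>f x\<bar>" "\<bar>g x\<bar>"] by (simp add: power2_eq_square)
    then show "norm (f x * g x) \<le> norm ((f x)\<^sup>2 + (g x)\<^sup>2)"
      using mult_nonneg_nonneg[OF abs_ge_zero[of "f x"] abs_ge_zero[of "g x"]]
      by (simp only: real_norm_def abs_mult abs_of_nonneg[OF add_nonneg_nonneg[OF zero_le_power2 zero_le_power2]])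
  qed
qed

lemma L2_lin:
  assumes "f \<in> L2 \<Omega>" "g \<in> L2 \<Omega>"
  shows "(\<lambda>x. a * f x + b * g x) \<in> L2 \<Omega>"
proof -
  have i: "integrable (lebesgue_on \<Omega>) (\<lambda>x. a\<^sup>2 * (f x)\<^sup>2 + b\<^sup>2 * (g x)\<^sup>2 + (2*a*b) * (f x * g x))"
    using assms L2_prod_int[OF assms] by (intro Bochner_Integration.integrable_add integrable_mult_right L2_sq)
  have "integrable (lebesgue_on \<Omega>) (\<lambda>x. (a * f x + b * g x)\<^sup>2)"
    by (rule Bochner_Integration.integrable_cong[THEN iffD1, OF refl _ i]) (simp add: power2_eq_square algebra_simps)
  moreover have "(\<lambda>x. a * f x + b * g x) \<in> borel_measurable (lebesgue_on \<Omega>)"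
    using assms by (intro borel_measurable_add borel_measurable_times borel_measurable_const L2_meas)
  ultimately show ?thesis by (simp add: L2_def)
qed

lemma L2_diff: "f \<in> L2 \<Omega> \<Longrightarrow> g \<in> L2 \<Omega> \<Longrightarrow> (\<lambda>x. f x - g x) \<in> L2 \<Omega>"
  using L2_lin[of f \<Omega> g 1 "-1"] by simp
lemma L2_add: "f \<in> L2 \<Omega> \<Longrightarrow> g \<in> L2 \<Omega> \<Longrightarrow> (\<lambda>x. f x + g x) \<in> L2 \<Omega>"
  using L2_lin[of f \<Omega> g 1 1] by simp
lemma L2_scale: "f \<in> L2 \<Omega> \<Longrightarrow> (\<lambda>x. a * f x) \<in> L2 \<Omega>"
  using L2_lin[of f \<Omega> f a 0] by simp
lemma L2_zero: "(\<lambda>x. 0) \<in> L2 \<Omega>"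
  by (simp add: L2_def)
lemma L2_comb: "f \<in> L2 \<Omega> \<Longrightarrow> g \<in> L2 \<Omega> \<Longrightarrow> (\<lambda>x. a * f x + g x) \<in> L2 \<Omega>"
  using L2_lin[of f \<Omega> g a 1] by simp

lemma L2_sum: "finite I \<Longrightarrow> (\<And>i. i \<in> I \<Longrightarrow> f i \<in> L2 \<Omega>) \<Longrightarrow> (\<lambda>x. \<Sum>i\<in>I. c i * f i x) \<in> L2 \<Omega>"
proof (induction I rule: finite_induct)
  case empty then show ?case by (simp add: L2_zero)
next
  case (insert a F)
  then show ?case using L2_comb[of "f a" \<Omega> "\<lambda>x. \<Sum>i\<in>F. c i * f i x" "c a"] by simp
qed

lemma ip_sym: "L2inner \<Omega> f g = L2inner \<Omega> g f"
  by (simp add: L2inner_def mult.commute)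

lemma ip_lin_left:
  assumes "f \<in> L2 \<Omega>" "g \<in> L2 \<Omega>" "h \<in> L2 \<Omega>"
  shows "L2inner \<Omega> (\<lambda>x. a * f x + b * g x) h = a * L2inner \<Omega> f h + b * L2inner \<Omega> g h"
proof -
  have "L2inner \<Omega> (\<lambda>x. a * f x + b * g x) h = integral\<^sup>L (lebesgue_on \<Omega>) (\<lambda>x. a * (f x * h x) + b * (g x * h x))"
    unfolding L2inner_def by (rule Bochner_Integration.integral_cong) (auto simp: algebra_simps)
  also have "\<dots> = a * L2inner \<Omega> f h + b * L2inner \<Omega> g h"
    unfolding L2inner_def using L2_prod_int[OF assms(1,3)] L2_prod_int[OF assms(2,3)] by simp
  finally show ?thesis .
qed

lemma ip_diff_left: "f \<in> L2 \<Omega> \<Longrightarrow> g \<in> L2 \<Omega> \<Longrightarrow> h \<in> L2 \<Omega> \<Longrightarrow>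
   L2inner \<Omega> (\<lambda>x. f x - g x) h = L2inner \<Omega> f h - L2inner \<Omega> g h"
  using ip_lin_left[of f \<Omega> g h 1 "-1"] by simp
lemma ip_add_left: "f \<in> L2 \<Omega> \<Longrightarrow> g \<in> L2 \<Omega> \<Longrightarrow> h \<in> L2 \<Omega> \<Longrightarrow>
   L2inner \<Omega> (\<lambda>x. f x + g x) h = L2inner \<Omega> f h + L2inner \<Omega> g h"
  using ip_lin_left[of f \<Omega> g h 1 1] by simp
lemma ip_comb_left: "f \<in> L2 \<Omega> \<Longrightarrow> g \<in> L2 \<Omega> \<Longrightarrow> h \<in> L2 \<Omega> \<Longrightarrow>
   L2inner \<Omega> (\<lambda>x. a * f x + g x) h = a * L2inner \<Omega> f h + L2inner \<Omega> g h"
  using ip_lin_left[of f \<Omega> g h a 1] by simp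
lemma ip_scale_left: "f \<in> L2 \<Omega> \<Longrightarrow> h \<in> L2 \<Omega> \<Longrightarrow>
   L2inner \<Omega> (\<lambda>x. a * f x) h = a * L2inner \<Omega> f h"
  using ip_lin_left[of f \<Omega> f h a 0] by simp
lemma ip_diff_right: "f \<in> L2 \<Omega> \<Longrightarrow> g \<in> L2 \<Omega> \<Longrightarrow> h \<in> L2 \<Omega> \<Longrightarrow>
   L2inner \<Omega> h (\<lambda>x. f x - g x) = L2inner \<Omega> h f - L2inner \<Omega> h g"
  using ip_diff_left[of f \<Omega> g h] by (simp add: ip_sym)
lemma ip_add_right: "f \<in> L2 \<Omega> \<Longrightarrow> g \<in> L2 \<Omega> \<Longrightarrow> h \<in> L2 \<Omega> \<Longrightarrow>
   L2inner \<Omega> h (\<lambda>x. f x + g x) = L2inner \<Omega> h f + L2inner \<Omega> h g"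
  using ip_add_left[of f \<Omega> g h] by (simp add: ip_sym)
lemma ip_scale_right: "f \<in> L2 \<Omega> \<Longrightarrow> h \<in> L2 \<Omega> \<Longrightarrow>
   L2inner \<Omega> h (\<lambda>x. a * f x) = a * L2inner \<Omega> h f"
  using ip_scale_left[of f \<Omega> h a] by (simp add: ip_sym)

lemma ip_self_nonneg: "0 \<le> L2inner \<Omega> f f"
  unfolding L2inner_def by (rule integral_nonneg_AE) simp

lemma norm_sq: "(L2norm \<Omega> f)\<^sup>2 = L2inner \<Omega> f f"
  using ip_self_nonneg[of \<Omega> f] by (simp add: L2norm_def L2inner_def power2_eq_square)

lemma norm_nonneg: "0 \<le> L2norm \<Omega> f"
  by (simp add: L2norm_def)

lemma norm_eq_sqrt: "L2norm \<Omega> f = sqrt (L2inner \<Omega> f f)"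
  by (simp add: L2norm_def L2inner_def power2_eq_square)

lemma cs_aux:
  fixes a b c :: real
  assumes h: "\<And>t. 0 \<le> a - 2 * t * b + t\<^sup>2 * c" and c0: "0 \<le> c"
  shows "b\<^sup>2 \<le> a * c"
proof (cases "c = 0")
  case True
  have "b = 0"
  proof (rule ccontr)
    assume "b \<noteq> 0"
    have "0 \<le> a - 2 * ((\<bar>a\<bar> + 1) / (2*b)) * b" using h[of "(\<bar>a\<bar> + 1) / (2*b)"] True by simp
    also have "2 * ((\<bar>a\<bar> + 1) / (2*b)) * b = \<bar>a\<bar> + 1" using \<open>b \<noteq> 0\<close> by (simp add: field_simps)
    finally show False by simp
  qed
  then show ?thesis using True by simp
next
  case False
  then have cp: "c > 0" using c0 by simp
  have "0 \<le> a - 2 * (b/c) * b + (b/c)\<^sup>2 * c" by (rule h)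
  also have "\<dots> = a - b\<^sup>2 / c" using cp by (simp add: field_simps power2_eq_square)
  finally show ?thesis using cp by (simp add: field_simps)
qed

lemma cauchy_schwarz:
  assumes "f \<in> L2 \<Omega>" "g \<in> L2 \<Omega>"
  shows "\<bar>L2inner \<Omega> f g\<bar> \<le> L2norm \<Omega> f * L2norm \<Omega> g"
proof -
  have "\<And>t. 0 \<le> L2inner \<Omega> f f - 2 * t * L2inner \<Omega> f g + t\<^sup>2 * L2inner \<Omega> g g"
  proof -
    fix t
    have "0 \<le> L2inner \<Omega> (\<lambda>x. f x - t * g x) (\<lambda>x. f x - t * g x)" by (rule ip_self_nonneg)
    also have "\<dots> = L2inner \<Omega> f f - 2 * t * L2inner \<Omega> f g + t\<^sup>2 * L2inner \<Omega> g g"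
      using assms L2_scale[OF assms(2), of t] L2_diff[OF assms(1) L2_scale[OF assms(2), of t]]
      by (simp add: ip_diff_left ip_diff_right ip_scale_left ip_scale_right ip_sym[of \<Omega> g f] power2_eq_square algebra_simps)
    finally show "0 \<le> L2inner \<Omega> f f - 2 * t * L2inner \<Omega> f g + t\<^sup>2 * L2inner \<Omega> g g" .
  qed
  then have "(L2inner \<Omega> f g)\<^sup>2 \<le> L2inner \<Omega> f f * L2inner \<Omega> g g"
    by (rule cs_aux) (rule ip_self_nonneg)
  also have "\<dots> = (L2norm \<Omega> f * L2norm \<Omega> g)\<^sup>2" by (simp add: norm_sq power_mult_distrib)
  finally show ?thesis
    using norm_nonneg[of \<Omega> f] norm_nonneg[of \<Omega> g] by (metis abs_le_square_iff abs_of_nonneg mult_nonneg_nonneg)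
qed

lemma norm_triangle:
  assumes "f \<in> L2 \<Omega>" "g \<in> L2 \<Omega>"
  shows "L2norm \<Omega> (\<lambda>x. f x + g x) \<le> L2norm \<Omega> f + L2norm \<Omega> g"
proof -
  have "(L2norm \<Omega> (\<lambda>x. f x + g x))\<^sup>2 = L2inner \<Omega> f f + 2 * L2inner \<Omega> f g + L2inner \<Omega> g g"
    using assms L2_add[OF assms] by (simp add: norm_sq ip_add_left ip_add_right ip_sym[of \<Omega> g f])
  also have "\<dots> \<le> (L2norm \<Omega> f + L2norm \<Omega> g)\<^sup>2"
    using cauchy_schwarz[OF assms] by (simp add: power2_sum norm_sq[symmetric])
  finally show ?thesis
    using norm_nonneg[of \<Omega> f] norm_nonneg[of \<Omega> g] by (meson add_nonneg_nonneg power2_le_imp_le)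
qed

lemma norm_triangle_diff:
  assumes "f \<in> L2 \<Omega>" "g \<in> L2 \<Omega>" "h \<in> L2 \<Omega>"
  shows "L2norm \<Omega> (\<lambda>x. f x - h x) \<le> L2norm \<Omega> (\<lambda>x. f x - g x) + L2norm \<Omega> (\<lambda>x. g x - h x)"
  using norm_triangle[OF L2_diff[OF assms(1,2)] L2_diff[OF assms(2,3)]] by simp



lemma fin_int_const:
  assumes "bounded \<Omega>" "\<Omega> \<in> sets lebesgue"
  shows "integrable (lebesgue_on \<Omega>) (\<lambda>x. c::real)"
proof -
  interpret finite_measure "lebesgue_on \<Omega>"
    using assms by (intro finite_measure_lebesgue_on bounded_set_imp_lmeasurable)
  show ?thesis by simp
qed

lemma Linfty_L2:
  assumes "bounded \<Omega>" "\<Omega> \<in> sets lebesgue" "f \<in> Linfty \<Omega>"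
  shows "f \<in> L2 \<Omega>"
proof -
  obtain B where fm: "f \<in> borel_measurable (lebesgue_on \<Omega>)" and B: "AE x in lebesgue_on \<Omega>. \<bar>f x\<bar> \<le> B"
    using assms(3) by (auto simp: Linfty_def)
  have "integrable (lebesgue_on \<Omega>) (\<lambda>x. (f x)\<^sup>2)"
  proof (rule Bochner_Integration.integrable_bound[OF fin_int_const[OF assms(1,2), of "B\<^sup>2"]])
    show "(\<lambda>x. (f x)\<^sup>2) \<in> borel_measurable (lebesgue_on \<Omega>)" using fm by measurable
    show "AE x in lebesgue_on \<Omega>. norm ((f x)\<^sup>2) \<le> norm (B\<^sup>2)"
      using B by eventually_elim (simp add: abs_le_square_iff[symmetric])
  qed
  then show ?thesis using fm by (simp add: L2_def)
qed

definition clip :: "('n \<Rightarrow> real) \<Rightarrow> ('n \<Rightarrow> real) \<Rightarrow> ('n \<Rightarrow> real) \<Rightarrow> 'n \<Rightarrow> real" where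
  "clip ua ub v = (\<lambda>x. max (ua x) (min (ub x) (v x)))"

lemma clip_L2:
  assumes "ua \<in> L2 \<Omega>" "ub \<in> L2 \<Omega>" "v \<in> L2 \<Omega>"
  shows "clip ua ub v \<in> L2 \<Omega>"
proof -
  have m: "clip ua ub v \<in> borel_measurable (lebesgue_on \<Omega>)"
    unfolding clip_def using assms[THEN L2_meas] by measurable
  have "integrable (lebesgue_on \<Omega>) (\<lambda>x. (clip ua ub v x)\<^sup>2)"
  proof (rule Bochner_Integration.integrable_bound[of _ "\<lambda>x. 2 * (ua x)\<^sup>2 + 2 * (ub x)\<^sup>2"])
    show "integrable (lebesgue_on \<Omega>) (\<lambda>x. 2 * (ua x)\<^sup>2 + 2 * (ub x)\<^sup>2)"
      using assms by (intro Bochner_Integration.integrable_add integrable_mult_right L2_sq)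
    show "(\<lambda>x. (clip ua ub v x)\<^sup>2) \<in> borel_measurable (lebesgue_on \<Omega>)" using m by measurable
    show "AE x in lebesgue_on \<Omega>. norm ((clip ua ub v x)\<^sup>2) \<le> norm (2 * (ua x)\<^sup>2 + 2 * (ub x)\<^sup>2)"
    proof (intro AE_I2)
      fix x
      have a: "\<bar>clip ua ub v x\<bar> \<le> \<bar>ua x\<bar> + \<bar>ub x\<bar>" unfolding clip_def by linarith
      have "(clip ua ub v x)\<^sup>2 \<le> (\<bar>ua x\<bar> + \<bar>ub x\<bar>)\<^sup>2"
        using a by (metis abs_ge_zero abs_le_square_iff abs_of_nonneg add_nonneg_nonneg power2_abs)
      also have "\<dots> \<le> 2 * (ua x)\<^sup>2 + 2 * (ub x)\<^sup>2"
        using sum_squares_bound[of "\<bar>ua x\<bar>" "\<bar>ub x\<bar>"] by (simp add: power2_sum)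
      finally show "norm ((clip ua ub v x)\<^sup>2) \<le> norm (2 * (ua x)\<^sup>2 + 2 * (ub x)\<^sup>2)" by simp
    qed
  qed
  then show ?thesis using m by (simp add: L2_def)
qed

lemma L2norm_mono_AE:
  assumes "AE x in lebesgue_on \<Omega>. (f x)\<^sup>2 \<le> (g x)\<^sup>2" "g \<in> L2 \<Omega>" "f \<in> L2 \<Omega>"
  shows "L2norm \<Omega> f \<le> L2norm \<Omega> g"
  unfolding L2norm_def using assms by (intro real_sqrt_le_mono integral_mono_AE L2_sq)

lemma proj_exists:
  assumes "ua \<in> L2 \<Omega>" "ub \<in> L2 \<Omega>" "AE x in lebesgue_on \<Omega>. ua x \<le> ub x" "v \<in> L2 \<Omega>"
  shows "projU \<Omega> ua ub v \<in> Uad \<Omega> ua ub \<and>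
      (\<forall>q\<in>Uad \<Omega> ua ub. L2norm \<Omega> (\<lambda>x. projU \<Omega> ua ub v x - v x) \<le> L2norm \<Omega> (\<lambda>x. q x - v x))"
proof -
  let ?c = "clip ua ub v"
  have cL: "?c \<in> L2 \<Omega>" using clip_L2 assms by blast
  have cU: "?c \<in> Uad \<Omega> ua ub"
    unfolding Uad_def using cL assms(3) by (auto simp: clip_def elim!: eventually_mono)
  have cm: "\<forall>q\<in>Uad \<Omega> ua ub. L2norm \<Omega> (\<lambda>x. ?c x - v x) \<le> L2norm \<Omega> (\<lambda>x. q x - v x)"
  proof
    fix q assume q: "q \<in> Uad \<Omega> ua ub"
    then have qL: "q \<in> L2 \<Omega>" and qA: "AE x in lebesgue_on \<Omega>. ua x \<le> q x \<and> q x \<le> ub x"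
      by (auto simp: Uad_def)
    show "L2norm \<Omega> (\<lambda>x. ?c x - v x) \<le> L2norm \<Omega> (\<lambda>x. q x - v x)"
    proof (rule L2norm_mono_AE)
      show "AE x in lebesgue_on \<Omega>. (?c x - v x)\<^sup>2 \<le> (q x - v x)\<^sup>2"
        using qA
      proof eventually_elim
        case (elim x)
        have "\<bar>?c x - v x\<bar> \<le> \<bar>q x - v x\<bar>" using elim unfolding clip_def by linarith
        then show ?case by (simp add: abs_le_square_iff)
      qed
      show "(\<lambda>x. q x - v x) \<in> L2 \<Omega>" by (rule L2_diff[OF qL assms(4)])
      show "(\<lambda>x. ?c x - v x) \<in> L2 \<Omega>" by (rule L2_diff[OF cL assms(4)])
    qed
  qed
  show ?thesis unfolding projU_def
    by (rule someI[of _ ?c]) (use cU cm in blast)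
qed

lemma first_var:
  fixes a N :: real
  assumes h: "\<And>t. 0 < t \<Longrightarrow> t \<le> 1 \<Longrightarrow> 0 \<le> 2 * t * a + t\<^sup>2 * N" and N: "0 \<le> N"
  shows "0 \<le> a"
proof (rule ccontr)
  assume "\<not> 0 \<le> a" then have a: "a < 0" by simp
  define t where "t = min 1 (- a / (N + 1))"
  have t0: "0 < t" using a N by (simp add: t_def divide_neg_pos)
  have t1: "t \<le> 1" by (simp add: t_def)
  have "t * N \<le> (- a / (N + 1)) * N" using N by (intro mult_right_mono) (auto simp: t_def)
  also have "\<dots> < - a" using a N by (simp add: field_simps)
  finally have tN: "t * N < - a" .
  have "2 * t * a + t\<^sup>2 * N = t * (2 * a + t * N)" by (simp add: power2_eq_square algebra_simps)
  also have "\<dots> < 0" using t0 tN a by (intro mult_pos_neg) auto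
  finally show False using h[OF t0 t1] by simp
qed

lemma norm_sq_comb:
  assumes "a \<in> L2 \<Omega>" "b \<in> L2 \<Omega>"
  shows "(L2norm \<Omega> (\<lambda>x. a x + t * b x))\<^sup>2 = (L2norm \<Omega> a)\<^sup>2 + 2 * t * L2inner \<Omega> a b + t\<^sup>2 * (L2norm \<Omega> b)\<^sup>2"
  unfolding norm_sq using assms L2_scale[OF assms(2), of t] L2_add[OF assms(1) L2_scale[OF assms(2), of t]]
  by (simp add: ip_add_left ip_add_right ip_scale_left ip_scale_right ip_sym[of \<Omega> b a] power2_eq_square algebra_simps)

lemma Uad_conv:
  assumes "p \<in> Uad \<Omega> ua ub" "q \<in> Uad \<Omega> ua ub" "0 \<le> t" "t \<le> 1"
  shows "(\<lambda>x. p x + t * (q x - p x)) \<in> Uad \<Omega> ua ub"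
proof -
  have pL: "p \<in> L2 \<Omega>" and qL: "q \<in> L2 \<Omega>" using assms by (auto simp: Uad_def)
  have "(\<lambda>x. (1 - t) * p x + t * q x) \<in> L2 \<Omega>" by (rule L2_lin[OF pL qL])
  moreover have "(\<lambda>x. (1 - t) * p x + t * q x) = (\<lambda>x. p x + t * (q x - p x))" by (auto simp: algebra_simps)
  ultimately have L: "(\<lambda>x. p x + t * (q x - p x)) \<in> L2 \<Omega>" by simp
  have "AE x in lebesgue_on \<Omega>. ua x \<le> p x \<and> p x \<le> ub x" "AE x in lebesgue_on \<Omega>. ua x \<le> q x \<and> q x \<le> ub x"
    using assms by (auto simp: Uad_def)
  then have "AE x in lebesgue_on \<Omega>. ua x \<le> p x + t * (q x - p x) \<and> p x + t * (q x - p x) \<le> ub x"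
  proof eventually_elim
    case (elim x)
    have "p x + t * (q x - p x) = (1 - t) * p x + t * q x" by (simp add: algebra_simps)
    moreover have "(1 - t) * ua x + t * ua x \<le> (1 - t) * p x + t * q x"
      using elim assms(3,4) by (intro add_mono mult_left_mono) auto
    moreover have "(1 - t) * p x + t * q x \<le> (1 - t) * ub x + t * ub x"
      using elim assms(3,4) by (intro add_mono mult_left_mono) auto
    ultimately show ?case by (simp add: algebra_simps)
  qed
  then show ?thesis using L by (simp add: Uad_def)
qed

lemma proj_VI_gen:
  assumes pU: "p \<in> Uad \<Omega> ua ub" and vL: "v \<in> L2 \<Omega>"
    and pmin: "\<forall>q\<in>Uad \<Omega> ua ub. L2norm \<Omega> (\<lambda>x. p x - v x) \<le> L2norm \<Omega> (\<lambda>x. q x - v x)"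
    and qU: "q \<in> Uad \<Omega> ua ub"
  shows "L2inner \<Omega> (\<lambda>x. v x - p x) (\<lambda>x. q x - p x) \<le> 0"
proof -
  have pL: "p \<in> L2 \<Omega>" and qL: "q \<in> L2 \<Omega>" using pU qU by (auto simp: Uad_def)
  have aL: "(\<lambda>x. p x - v x) \<in> L2 \<Omega>" by (rule L2_diff[OF pL vL])
  have bL: "(\<lambda>x. q x - p x) \<in> L2 \<Omega>" by (rule L2_diff[OF qL pL])
  have "0 \<le> L2inner \<Omega> (\<lambda>x. p x - v x) (\<lambda>x. q x - p x)"
  proof (rule first_var)
    fix t :: real assume t: "0 < t" "t \<le> 1"
    have "L2norm \<Omega> (\<lambda>x. p x - v x) \<le> L2norm \<Omega> (\<lambda>x. (p x + t * (q x - p x)) - v x)"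
      using pmin Uad_conv[OF pU qU, of t] t by auto
    also have "(\<lambda>x. (p x + t * (q x - p x)) - v x) = (\<lambda>x. (p x - v x) + t * (q x - p x))"
      by (auto simp: algebra_simps)
    finally have "(L2norm \<Omega> (\<lambda>x. p x - v x))\<^sup>2 \<le> (L2norm \<Omega> (\<lambda>x. (p x - v x) + t * (q x - p x)))\<^sup>2"
      using norm_nonneg by (intro power_mono) auto
    then show "0 \<le> 2 * t * L2inner \<Omega> (\<lambda>x. p x - v x) (\<lambda>x. q x - p x) + t\<^sup>2 * (L2norm \<Omega> (\<lambda>x. q x - p x))\<^sup>2"
      using norm_sq_comb[OF aL bL, of t] by simp
  qed simp
  moreover have "L2inner \<Omega> (\<lambda>x. v x - p x) (\<lambda>x. q x - p x) = - L2inner \<Omega> (\<lambda>x. p x - v x) (\<lambda>x. q x - p x)"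
    using pL vL bL by (simp add: ip_diff_left)
  ultimately show ?thesis by simp
qed



locale bset =
  fixes \<Omega> :: "'n::euclidean_space set"
    and S :: "('n \<Rightarrow> real) \<Rightarrow> 'y::{real_inner, complete_space}"
    and Sstar :: "'y \<Rightarrow> ('n \<Rightarrow> real)"
    and Sh :: "real \<Rightarrow> ('n \<Rightarrow> real) \<Rightarrow> 'y"
    and Shstar :: "real \<Rightarrow> 'y \<Rightarrow> ('n \<Rightarrow> real)"
    and z :: 'y and ua ub udag :: "'n \<Rightarrow> real" and w :: 'y
    and \<delta> :: "real \<Rightarrow> real"
    and \<alpha> \<epsilon> :: "nat \<Rightarrow> real" and hmax :: real
    and uin :: "real \<Rightarrow> nat \<Rightarrow> ('n \<Rightarrow> real)"
  assumes \<Omega>_bounded: "bounded \<Omega>" and \<Omega>_meas: "\<Omega> \<in> sets lebesgue"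
    and S_lin: "bounded_linear_L2 \<Omega> S" and S_adj: "is_adjoint_L2 \<Omega> S Sstar"
    and ua: "ua \<in> Linfty \<Omega>" and ub: "ub \<in> Linfty \<Omega>"
    and uab: "AE x in lebesgue_on \<Omega>. ua x \<le> ub x"
    and Sh_lin: "\<And>h. h > 0 \<Longrightarrow> bounded_linear_L2 \<Omega> (Sh h)"
    and Sh_adj: "\<And>h. h > 0 \<Longrightarrow> is_adjoint_L2 \<Omega> (Sh h) (Shstar h)"
    and \<delta>_cont: "continuous_on {0..} \<delta>" and \<delta>_mono: "mono_on {0..} \<delta>"
    and \<delta>_0: "\<delta> 0 = 0" and \<delta>_nonneg: "\<And>h. h \<ge> 0 \<Longrightarrow> \<delta> h \<ge> 0"
    and \<delta>_est: "\<And>h u. h > 0 \<Longrightarrow> u \<in> Uad \<Omega> ua ub \<Longrightarrow>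
        norm (S u - Sh h u) + L2norm \<Omega> (\<lambda>x. Sstar (Sh h u - z) x - Shstar h (Sh h u - z) x) \<le> \<delta> h"
    and \<alpha>_pos: "\<And>k. k \<ge> 1 \<Longrightarrow> \<alpha> k > 0"
    and \<alpha>_bdd: "\<exists>B. \<forall>k\<ge>1. \<alpha> k \<le> B"
    and udag_sol: "udag \<in> Uad \<Omega> ua ub"
    and udag_min: "\<And>u. u \<in> Uad \<Omega> ua ub \<Longrightarrow>
        (1/2) * (norm (S udag - z))\<^sup>2 \<le> (1/2) * (norm (S u - z))\<^sup>2"
    and source: "AE x in lebesgue_on \<Omega>. udag x = projU \<Omega> ua ub (Sstar w) x"
    and \<epsilon>_pos: "\<And>k. k \<ge> 1 \<Longrightarrow> \<epsilon> k > 0"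
    and R_sum: "summable (\<lambda>j. let i = Suc j in
        \<epsilon> i / \<alpha> i + (\<epsilon> i)\<^sup>2 / (\<alpha> i)\<^sup>2 + gammaB \<alpha> (i - 1) * \<epsilon> i / \<alpha> i + (\<epsilon> i)\<^sup>2 / \<alpha> i)"
    and hmax_pos: "hmax > 0"
    and alg0: "\<And>h. 0 < h \<Longrightarrow> h \<le> hmax \<Longrightarrow> uin h 0 = projU \<Omega> ua ub (\<lambda>x. 0)"
    and algU: "\<And>h k. 0 < h \<Longrightarrow> h \<le> hmax \<Longrightarrow> k \<ge> 1 \<Longrightarrow> uin h k \<in> Uad \<Omega> ua ub"
    and algB: "\<And>h k. 0 < h \<Longrightarrow> h \<le> hmax \<Longrightarrow> k \<ge> 1 \<Longrightarrow>
        breg \<Omega> ua ub (Sh h) (Shstar h) z (\<alpha> k) (lamB \<alpha> (Sh h) (Shstar h) z (uin h) (k - 1)) (uin h k)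
          \<le> \<epsilon> k"
begin

lemma uaL: "ua \<in> L2 \<Omega>" using Linfty_L2[OF \<Omega>_bounded \<Omega>_meas ua] .
lemma ubL: "ub \<in> L2 \<Omega>" using Linfty_L2[OF \<Omega>_bounded \<Omega>_meas ub] .

lemma UadL: "u \<in> Uad \<Omega> ua ub \<Longrightarrow> u \<in> L2 \<Omega>" by (simp add: Uad_def)

lemma proj: "v \<in> L2 \<Omega> \<Longrightarrow> projU \<Omega> ua ub v \<in> Uad \<Omega> ua ub"
  using proj_exists[OF uaL ubL uab] by blast

lemma proj_VI: "v \<in> L2 \<Omega> \<Longrightarrow> q \<in> Uad \<Omega> ua ub \<Longrightarrow>
   L2inner \<Omega> (\<lambda>x. v x - projU \<Omega> ua ub v x) (\<lambda>x. q x - projU \<Omega> ua ub v x) \<le> 0"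
  using proj_exists[OF uaL ubL uab] by (intro proj_VI_gen) auto

definition M :: real where "M = L2norm \<Omega> (\<lambda>x. \<bar>ua x\<bar> + \<bar>ub x\<bar>)"

lemma abs_L2: "f \<in> L2 \<Omega> \<Longrightarrow> (\<lambda>x. \<bar>f x\<bar>) \<in> L2 \<Omega>"
  by (auto simp: L2_def)

lemma Uad_bound: "u \<in> Uad \<Omega> ua ub \<Longrightarrow> L2norm \<Omega> u \<le> M"
  unfolding M_def
proof (rule L2norm_mono_AE)
  assume u: "u \<in> Uad \<Omega> ua ub"
  then show "u \<in> L2 \<Omega>" by (simp add: Uad_def)
  show "(\<lambda>x. \<bar>ua x\<bar> + \<bar>ub x\<bar>) \<in> L2 \<Omega>" using L2_add[OF abs_L2[OF uaL] abs_L2[OF ubL]] .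
  show "AE x in lebesgue_on \<Omega>. (u x)\<^sup>2 \<le> (\<bar>ua x\<bar> + \<bar>ub x\<bar>)\<^sup>2"
    using u unfolding Uad_def
  proof (safe, eventually_elim)
    case (elim x)
    then have "\<bar>u x\<bar> \<le> \<bar>\<bar>ua x\<bar> + \<bar>ub x\<bar>\<bar>" by linarith
    then show ?case by (metis abs_le_square_iff)
  qed
qed

lemma M_nonneg: "0 \<le> M" by (simp add: M_def norm_nonneg)

lemma Uad_diff_bound:
  assumes "u \<in> Uad \<Omega> ua ub" "q \<in> Uad \<Omega> ua ub"
  shows "L2norm \<Omega> (\<lambda>x. u x - q x) \<le> 2 * M"
proof -
  have "L2norm \<Omega> (\<lambda>x. u x + (-1) * q x) \<le> L2norm \<Omega> u + L2norm \<Omega> (\<lambda>x. (-1) * q x)"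
    using assms by (intro norm_triangle L2_scale UadL)
  moreover have "L2norm \<Omega> (\<lambda>x. (-1) * q x) = L2norm \<Omega> q" by (simp add: L2norm_def)
  ultimately show ?thesis using Uad_bound[OF assms(1)] Uad_bound[OF assms(2)] by simp
qed

definition KS :: real where "KS = max 0 (SOME K. \<forall>f\<in>L2 \<Omega>. norm (S f) \<le> K * L2norm \<Omega> f)"

lemma KS_nonneg: "0 \<le> KS" by (simp add: KS_def)

lemma S_bound: "f \<in> L2 \<Omega> \<Longrightarrow> norm (S f) \<le> KS * L2norm \<Omega> f"
proof -
  assume f: "f \<in> L2 \<Omega>"
  have "\<exists>K. \<forall>f\<in>L2 \<Omega>. norm (S f) \<le> K * L2norm \<Omega> f" using S_lin by (simp add: bounded_linear_L2_def)
  then have "\<forall>f\<in>L2 \<Omega>. norm (S f) \<le> (SOME K. \<forall>f\<in>L2 \<Omega>. norm (S f) \<le> K * L2norm \<Omega> f) * L2norm \<Omega> f"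
    by (rule someI_ex)
  then have "norm (S f) \<le> (SOME K. \<forall>f\<in>L2 \<Omega>. norm (S f) \<le> K * L2norm \<Omega> f) * L2norm \<Omega> f" using f by blast
  also have "\<dots> \<le> KS * L2norm \<Omega> f" unfolding KS_def by (intro mult_right_mono norm_nonneg) simp
  finally show ?thesis .
qed

lemma lin_diff:
  assumes "bounded_linear_L2 \<Omega> T" "f \<in> L2 \<Omega>" "g \<in> L2 \<Omega>"
  shows "T (\<lambda>x. f x - g x) = T f - T g"
  using assms unfolding bounded_linear_L2_def
  by (metis (no_types, lifting) ext minus_real_def mult_minus_left scaleR_minus_left
      scaleR_one lambda_one diff_conv_add_uminus)

lemma lin_comb:
  assumes "bounded_linear_L2 \<Omega> T" "f \<in> L2 \<Omega>" "g \<in> L2 \<Omega>"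
  shows "T (\<lambda>x. a * f x + b * g x) = a *\<^sub>R T f + b *\<^sub>R T g"
  using assms unfolding bounded_linear_L2_def by blast

lemma S_adj': "f \<in> L2 \<Omega> \<Longrightarrow> L2inner \<Omega> f (Sstar y) = inner (S f) y"
  using S_adj by (simp add: is_adjoint_L2_def)
lemma Sstar_L2: "Sstar y \<in> L2 \<Omega>"
  using S_adj by (simp add: is_adjoint_L2_def)
lemma Sh_adj': "h > 0 \<Longrightarrow> f \<in> L2 \<Omega> \<Longrightarrow> L2inner \<Omega> f (Shstar h y) = inner (Sh h f) y"
  using Sh_adj by (simp add: is_adjoint_L2_def)
lemma Shstar_L2: "h > 0 \<Longrightarrow> Shstar h y \<in> L2 \<Omega>"
  using Sh_adj by (simp add: is_adjoint_L2_def)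

lemma disc_est:
  assumes h: "h > 0" and u: "u \<in> Uad \<Omega> ua ub" and v: "v \<in> L2 \<Omega>"
  shows "\<bar>L2inner \<Omega> (Shstar h (z - Sh h u)) v - inner (S v) (z - S u)\<bar> \<le> (1 + KS) * \<delta> h * L2norm \<Omega> v"
proof -
  let ?y = "Sh h u - z"
  let ?d = "\<lambda>x. Sstar ?y x - Shstar h ?y x"
  have dL: "?d \<in> L2 \<Omega>" by (intro L2_diff Sstar_L2 Shstar_L2 h)
  have e: "norm (S u - Sh h u) + L2norm \<Omega> ?d \<le> \<delta> h" using \<delta>_est[OF h u] .
  have 1: "L2inner \<Omega> (Shstar h (z - Sh h u)) v = inner (Sh h v) (z - Sh h u)"
    using Sh_adj'[OF h v] by (simp add: ip_sym)
  have 2: "inner (Sh h v) (z - Sh h u) = - L2inner \<Omega> (Shstar h ?y) v"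
    using Sh_adj'[OF h v, of ?y] by (simp add: ip_sym inner_diff_right)
  have 3: "L2inner \<Omega> (Shstar h ?y) v = L2inner \<Omega> (Sstar ?y) v - L2inner \<Omega> ?d v"
    using ip_diff_left[OF Sstar_L2 Shstar_L2[OF h] v] by simp
  have 4: "L2inner \<Omega> (Sstar ?y) v = inner (S v) ?y" using S_adj'[OF v] by (simp add: ip_sym)
  have "L2inner \<Omega> (Shstar h (z - Sh h u)) v - inner (S v) (z - S u) = L2inner \<Omega> ?d v + inner (S v) (S u - Sh h u)"
    using 1 2 3 4 by (simp add: inner_diff_right algebra_simps)
  also have "\<bar>\<dots>\<bar> \<le> L2norm \<Omega> ?d * L2norm \<Omega> v + norm (S v) * norm (S u - Sh h u)"
    using cauchy_schwarz[OF dL v] Cauchy_Schwarz_ineq2[of "S v" "S u - Sh h u"] by linarith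
  also have "\<dots> \<le> \<delta> h * L2norm \<Omega> v + (KS * L2norm \<Omega> v) * \<delta> h"
  proof (intro add_mono mult_right_mono mult_mono)
    show "L2norm \<Omega> ?d \<le> \<delta> h" using e by (smt (verit) norm_ge_zero)
    show "norm (S u - Sh h u) \<le> \<delta> h" using e norm_nonneg[of \<Omega> ?d] by linarith
  qed (auto simp: S_bound v norm_nonneg KS_nonneg)
  finally show ?thesis by (simp add: algebra_simps)
qed

end


definition Dfun :: "'n::euclidean_space set \<Rightarrow> ('n \<Rightarrow> real) \<Rightarrow> ('n \<Rightarrow> real) \<Rightarrow> ('n \<Rightarrow> real) \<Rightarrow> real" where
  "Dfun \<Omega> U P L = (1/2) * (L2norm \<Omega> (\<lambda>x. U x - P x))\<^sup>2 + L2inner \<Omega> P (\<lambda>x. U x - P x) - L2inner \<Omega> L (\<lambda>x. U x - P x)"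

lemma D_lower_gen:
  assumes "U \<in> L2 \<Omega>" "P \<in> L2 \<Omega>" "L \<in> L2 \<Omega>"
    and "L2inner \<Omega> (\<lambda>x. L x - P x) (\<lambda>x. U x - P x) \<le> 0"
  shows "(1/2) * (L2norm \<Omega> (\<lambda>x. U x - P x))\<^sup>2 \<le> Dfun \<Omega> U P L"
  using assms L2_diff[OF assms(1,2)] unfolding Dfun_def by (simp add: ip_diff_left)

lemma D_rec_gen:
  assumes L: "U \<in> L2 \<Omega>" "P \<in> L2 \<Omega>" "Q \<in> L2 \<Omega>" "L \<in> L2 \<Omega>" "L' \<in> L2 \<Omega>"
    and VI: "L2inner \<Omega> (\<lambda>x. L' x - Q x) (\<lambda>x. P x - Q x) \<le> 0"
  shows "Dfun \<Omega> U P L \<le> Dfun \<Omega> U Q L' - (L2inner \<Omega> L (\<lambda>x. U x - P x) - L2inner \<Omega> L' (\<lambda>x. U x - P x))"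
proof -
  have nn: "0 \<le> L2inner \<Omega> (\<lambda>x. P x - Q x) (\<lambda>x. P x - Q x)" by (rule ip_self_nonneg)
  show ?thesis using VI nn L L2_diff[OF L(1) L(2)] L2_diff[OF L(1) L(3)] L2_diff[OF L(2) L(3)]
      L2_diff[OF L(4) L(2)] L2_diff[OF L(5) L(3)]
    unfolding Dfun_def norm_sq
    by (simp add: ip_diff_left ip_diff_right ip_sym[of \<Omega> P U] ip_sym[of \<Omega> Q U] ip_sym[of \<Omega> Q P] field_simps)
qed



context bset begin

definition t :: "nat \<Rightarrow> real" where "t k = 1 / \<alpha> k"
definition lam :: "real \<Rightarrow> nat \<Rightarrow> 'n \<Rightarrow> real" where "lam h k = lamB \<alpha> (Sh h) (Shstar h) z (uin h) k"
definition p :: "real \<Rightarrow> nat \<Rightarrow> 'n \<Rightarrow> real" where "p h k = projU \<Omega> ua ub (lam h k)"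

lemma t_pos: "k \<ge> 1 \<Longrightarrow> t k > 0" using \<alpha>_pos by (simp add: t_def)

lemma gamma_Suc: "gammaB \<alpha> (Suc k) = gammaB \<alpha> k + t (Suc k)"
  by (simp add: gammaB_def t_def)
lemma gamma_0: "gammaB \<alpha> 0 = 0" by (simp add: gammaB_def)
lemma gamma_nonneg: "0 \<le> gammaB \<alpha> k"
  unfolding gammaB_def using \<alpha>_pos by (intro sum_nonneg) (auto simp: less_imp_le)

lemma lam_L2: "h > 0 \<Longrightarrow> lam h k \<in> L2 \<Omega>"
  unfolding lam_def lamB_def by (intro L2_sum Shstar_L2) auto

lemma lam_0: "lam h 0 = (\<lambda>x. 0)" by (simp add: lam_def lamB_def)

lemma lam_Suc: "lam h (Suc k) = (\<lambda>x. t (Suc k) * Shstar h (z - Sh h (uin h (Suc k))) x + lam h k x)"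
  by (simp add: lam_def lamB_def t_def add.commute)

lemma p_U: "h > 0 \<Longrightarrow> p h k \<in> Uad \<Omega> ua ub"
  unfolding p_def by (intro proj lam_L2)
lemma p_L2: "h > 0 \<Longrightarrow> p h k \<in> L2 \<Omega>" using p_U UadL by blast

lemma udagL: "udag \<in> L2 \<Omega>" using udag_sol UadL by blast

lemma p_VI: "h > 0 \<Longrightarrow> q \<in> Uad \<Omega> ua ub \<Longrightarrow>
  L2inner \<Omega> (\<lambda>x. lam h k x - p h k x) (\<lambda>x. q x - p h k x) \<le> 0"
  unfolding p_def by (intro proj_VI lam_L2)

lemma u_p_close:
  assumes h: "0 < h" "h \<le> hmax" and k: "k \<ge> 1"
  shows "L2norm \<Omega> (\<lambda>x. uin h k x - p h k x) \<le> \<epsilon> k"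
proof -
  obtain j where j: "k = Suc j" using k by (cases k) auto
  have "(\<lambda>x. 1 / \<alpha> k * Shstar h (z - Sh h (uin h k)) x + lamB \<alpha> (Sh h) (Shstar h) z (uin h) (k - 1) x) = lam h k"
    using lam_Suc[of h j] j by (simp add: lam_def t_def)
  then have "breg \<Omega> ua ub (Sh h) (Shstar h) z (\<alpha> k) (lamB \<alpha> (Sh h) (Shstar h) z (uin h) (k - 1)) (uin h k)
      = (1 + 1 / \<alpha> k) * L2norm \<Omega> (\<lambda>x. uin h k x - p h k x)"
    by (simp add: breg_def p_def)
  moreover have "L2norm \<Omega> (\<lambda>x. uin h k x - p h k x) \<le> (1 + 1 / \<alpha> k) * L2norm \<Omega> (\<lambda>x. uin h k x - p h k x)"
    using \<alpha>_pos[OF k] norm_nonneg[of \<Omega> "\<lambda>x. uin h k x - p h k x"]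
    by (simp add: algebra_simps)
  ultimately show ?thesis using algB[OF h k] by linarith
qed

definition D :: "real \<Rightarrow> nat \<Rightarrow> real" where "D h k = Dfun \<Omega> udag (p h k) (lam h k)"

definition v :: "real \<Rightarrow> nat \<Rightarrow> 'n \<Rightarrow> real" where "v h k = (\<lambda>x. udag x - p h k x)"

lemma v_L2: "h > 0 \<Longrightarrow> v h k \<in> L2 \<Omega>" unfolding v_def by (intro L2_diff udagL p_L2)

lemma D_lower: "h > 0 \<Longrightarrow> (1/2) * (L2norm \<Omega> (v h k))\<^sup>2 \<le> D h k"
  unfolding D_def v_def by (intro D_lower_gen udagL p_L2 lam_L2 p_VI udag_sol)

lemma D_rec0:
  assumes "h > 0"
  shows "D h (Suc k) \<le> D h k - t (Suc k) * L2inner \<Omega> (Shstar h (z - Sh h (uin h (Suc k)))) (v h (Suc k))"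
proof -
  have "D h (Suc k) \<le> D h k - (L2inner \<Omega> (lam h (Suc k)) (v h (Suc k)) - L2inner \<Omega> (lam h k) (v h (Suc k)))"
    unfolding D_def v_def using assms
    by (intro D_rec_gen udagL p_L2 lam_L2 p_VI p_U)
  also have "L2inner \<Omega> (lam h (Suc k)) (v h (Suc k)) = t (Suc k) * L2inner \<Omega> (Shstar h (z - Sh h (uin h (Suc k)))) (v h (Suc k)) + L2inner \<Omega> (lam h k) (v h (Suc k))"
    unfolding lam_Suc using assms by (intro ip_comb_left Shstar_L2 lam_L2 v_L2)
  finally show ?thesis by simp
qed

definition r :: 'y where "r = z - S udag"
definition \<sigma> :: "real \<Rightarrow> nat \<Rightarrow> 'y" where "\<sigma> h i = S udag - S (uin h i)"
definition W :: "real \<Rightarrow> nat \<Rightarrow> 'y" where "W h k = (\<Sum>i=1..k. t i *\<^sub>R \<sigma> h i)"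

lemma W_Suc: "W h (Suc k) = W h k + t (Suc k) *\<^sub>R \<sigma> h (Suc k)" by (simp add: W_def)
lemma W_0: "W h 0 = 0" by (simp add: W_def)

lemma lam_inner:
  assumes h: "0 < h" "h \<le> hmax" and vL: "f \<in> L2 \<Omega>"
  shows "\<bar>L2inner \<Omega> (lam h k) f - (\<Sum>i=1..k. t i * inner (S f) (z - S (uin h i)))\<bar>
     \<le> (1 + KS) * \<delta> h * L2norm \<Omega> f * gammaB \<alpha> k"
proof (induction k)
  case 0
  then show ?case by (simp add: lam_0 L2inner_def gamma_0)
next
  case (Suc k)
  let ?a = "L2inner \<Omega> (Shstar h (z - Sh h (uin h (Suc k)))) f"
  let ?b = "inner (S f) (z - S (uin h (Suc k)))"
  have e: "\<bar>?a - ?b\<bar> \<le> (1 + KS) * \<delta> h * L2norm \<Omega> f"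
    using disc_est[OF h(1) algU[OF h] vL] by simp
  have tp: "0 < t (Suc k)" using t_pos by simp
  have "\<bar>t (Suc k) * (?a - ?b)\<bar> \<le> t (Suc k) * ((1 + KS) * \<delta> h * L2norm \<Omega> f)"
    using e tp by (simp add: abs_mult)
  moreover have "L2inner \<Omega> (lam h (Suc k)) f = t (Suc k) * ?a + L2inner \<Omega> (lam h k) f"
    unfolding lam_Suc using h by (intro ip_comb_left Shstar_L2 lam_L2 vL)
  ultimately show ?case using Suc.IH by (simp add: gamma_Suc algebra_simps abs_le_iff)
qed

lemma sum_split:
  "(\<Sum>i=1..k. t i * inner y (z - S (uin h i))) = gammaB \<alpha> k * inner y r + inner y (W h k)"
proof -
  have "(\<Sum>i=1..k. t i * inner y (z - S (uin h i))) = (\<Sum>i=1..k. t i * inner y r + inner y (t i *\<^sub>R \<sigma> h i))"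
    by (intro sum.cong) (auto simp: r_def \<sigma>_def inner_diff_right algebra_simps)
  also have "\<dots> = gammaB \<alpha> k * inner y r + inner y (W h k)"
    by (simp add: sum.distrib W_def inner_sum_right sum_distrib_right gammaB_def t_def)
  finally show ?thesis .
qed

end


lemma D_src_gen:
  assumes L: "U \<in> L2 \<Omega>" "P \<in> L2 \<Omega>" "L \<in> L2 \<Omega>" "X \<in> L2 \<Omega>"
    and VI: "L2inner \<Omega> (\<lambda>x. X x - U x) (\<lambda>x. P x - U x) \<le> 0"
  shows "Dfun \<Omega> U P L \<le> L2inner \<Omega> X (\<lambda>x. U x - P x) - L2inner \<Omega> L (\<lambda>x. U x - P x)"
proof -
  have nn: "0 \<le> L2inner \<Omega> (\<lambda>x. U x - P x) (\<lambda>x. U x - P x)" by (rule ip_self_nonneg)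
  show ?thesis using VI nn L L2_diff[OF L(1) L(2)] L2_diff[OF L(2) L(1)] L2_diff[OF L(4) L(1)]
    unfolding Dfun_def norm_sq
    by (simp add: ip_diff_left ip_diff_right ip_sym[of \<Omega> P U] ip_sym[of \<Omega> X U] ip_sym[of \<Omega> X P] field_simps)
qed

lemma ip_cong_AE:
  assumes "f \<in> L2 \<Omega>" "g \<in> L2 \<Omega>" "f' \<in> L2 \<Omega>" "g' \<in> L2 \<Omega>"
    and "AE x in lebesgue_on \<Omega>. f x = f' x" "AE x in lebesgue_on \<Omega>. g x = g' x"
  shows "L2inner \<Omega> f g = L2inner \<Omega> f' g'"
  unfolding L2inner_def
  using assms(5,6) by (intro integral_cong_AE borel_measurable_times L2_meas assms(1-4)) auto

lemma Y_ident:
  fixes x a :: "'y::real_inner"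
  shows "inner a x + (1/2) * (norm x)\<^sup>2 \<le> (1/2) * (norm (x + a))\<^sup>2"
proof -
  have "(norm (x + a))\<^sup>2 = (norm x)\<^sup>2 + 2 * inner a x + (norm a)\<^sup>2"
    by (simp add: power2_norm_eq_inner inner_add inner_commute)
  then show ?thesis using zero_le_power2[of "norm a"] by linarith
qed

lemma Y_sq:
  fixes a b :: "'y::real_inner"
  shows "(norm (a + s *\<^sub>R b))\<^sup>2 = (norm a)\<^sup>2 + 2 * s * inner a b + s\<^sup>2 * (norm b)\<^sup>2"
  unfolding power2_norm_eq_inner
  by (simp add: inner_add_left inner_add_right inner_commute[of b a] power2_eq_square algebra_simps)

context bset begin

lemma opt:
  assumes q: "q \<in> Uad \<Omega> ua ub"
  shows "inner r (S q - S udag) \<le> 0"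
proof -
  let ?a = "S udag - z" and ?b = "S q - S udag"
  have qL: "q \<in> L2 \<Omega>" using q UadL by blast
  have "0 \<le> inner ?a ?b"
  proof (rule first_var)
    fix s :: real assume s: "0 < s" "s \<le> 1"
    have uU: "(\<lambda>x. udag x + s * (q x - udag x)) \<in> Uad \<Omega> ua ub"
      using Uad_conv[OF udag_sol q] s by simp
    have "(\<lambda>x. udag x + s * (q x - udag x)) = (\<lambda>x. (1 - s) * udag x + s * q x)" by (auto simp: algebra_simps)
    then have "S (\<lambda>x. udag x + s * (q x - udag x)) = (1 - s) *\<^sub>R S udag + s *\<^sub>R S q"
      using lin_comb[OF S_lin udagL qL] by simp
    also have "\<dots> = S udag + s *\<^sub>R ?b" by (simp add: algebra_simps)
    finally have Su: "S (\<lambda>x. udag x + s * (q x - udag x)) - z = ?a + s *\<^sub>R ?b" by (simp add: algebra_simps)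
    have "(norm ?a)\<^sup>2 \<le> (norm (?a + s *\<^sub>R ?b))\<^sup>2" using udag_min[OF uU] Su by simp
    also have "\<dots> = (norm ?a)\<^sup>2 + 2 * s * inner ?a ?b + s\<^sup>2 * (norm ?b)\<^sup>2"
      by (rule Y_sq)
    finally show "0 \<le> 2 * s * inner ?a ?b + s\<^sup>2 * (norm ?b)\<^sup>2" by simp
  qed simp
  then show ?thesis by (simp add: r_def inner_diff_left inner_diff_right inner_commute)
qed

lemma src_VI:
  assumes q: "q \<in> Uad \<Omega> ua ub"
  shows "L2inner \<Omega> (\<lambda>x. Sstar w x - udag x) (\<lambda>x. q x - udag x) \<le> 0"
proof -
  let ?P = "projU \<Omega> ua ub (Sstar w)"
  have PL: "?P \<in> L2 \<Omega>" using proj[OF Sstar_L2] UadL by blast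
  have qL: "q \<in> L2 \<Omega>" using q UadL by blast
  have "L2inner \<Omega> (\<lambda>x. Sstar w x - ?P x) (\<lambda>x. q x - ?P x) = L2inner \<Omega> (\<lambda>x. Sstar w x - udag x) (\<lambda>x. q x - udag x)"
  proof (rule ip_cong_AE)
    show "AE x in lebesgue_on \<Omega>. Sstar w x - ?P x = Sstar w x - udag x"
      using source by eventually_elim simp
    show "AE x in lebesgue_on \<Omega>. q x - ?P x = q x - udag x"
      using source by eventually_elim simp
  qed (intro L2_diff Sstar_L2 PL qL udagL)+
  then show ?thesis using proj_VI[OF Sstar_L2 q, of w] by simp
qed

lemma Sv_r:
  assumes h: "h > 0"
  shows "0 \<le> inner (S (v h k)) r"
proof -
  have "S (v h k) = S udag - S (p h k)" unfolding v_def by (intro lin_diff S_lin udagL p_L2 h)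
  then show ?thesis using opt[OF p_U[OF h]] by (simp add: inner_commute inner_diff_right inner_diff_left)
qed

lemma v_bound: "h > 0 \<Longrightarrow> L2norm \<Omega> (v h k) \<le> 2 * M"
  unfolding v_def by (intro Uad_diff_bound udag_sol p_U)

lemma Se_bound:
  assumes h: "0 < h" "h \<le> hmax" and k: "k \<ge> 1"
  shows "norm (S (uin h k) - S (p h k)) \<le> KS * \<epsilon> k"
proof -
  have uL: "uin h k \<in> L2 \<Omega>" using UadL[OF algU[OF h k]] .
  have pL: "p h k \<in> L2 \<Omega>" by (rule p_L2) (rule h(1))
  have dL: "(\<lambda>x. uin h k x - p h k x) \<in> L2 \<Omega>" using L2_diff[OF uL pL] .
  have "norm (S (uin h k) - S (p h k)) = norm (S (\<lambda>x. uin h k x - p h k x))"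
    using lin_diff[OF S_lin uL pL] by simp
  also have "\<dots> \<le> KS * L2norm \<Omega> (\<lambda>x. uin h k x - p h k x)"
    using S_bound[OF dL] .
  also have "\<dots> \<le> KS * \<epsilon> k" using mult_left_mono[OF u_p_close[OF h k] KS_nonneg] .
  finally show ?thesis .
qed

lemma Sv_decomp:
  assumes h: "0 < h" "h \<le> hmax" and k: "k \<ge> 1"
  shows "S (v h k) = \<sigma> h k + (S (uin h k) - S (p h k))"
proof -
  have "S (v h k) = S udag - S (p h k)" unfolding v_def using lin_diff[OF S_lin udagL p_L2[OF h(1)]] by simp
  then show ?thesis by (simp add: \<sigma>_def)
qed

lemma sigma_bound:
  assumes h: "0 < h" "h \<le> hmax" and k: "k \<ge> 1"
  shows "norm (\<sigma> h k) \<le> KS * (2 * M)"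
proof -
  have uU: "uin h k \<in> Uad \<Omega> ua ub" using algU[OF h k] .
  have uL: "uin h k \<in> L2 \<Omega>" using UadL[OF uU] .
  have dL: "(\<lambda>x. udag x - uin h k x) \<in> L2 \<Omega>" using L2_diff[OF udagL uL] .
  have "norm (\<sigma> h k) = norm (S (\<lambda>x. udag x - uin h k x))" unfolding \<sigma>_def using lin_diff[OF S_lin udagL uL] by simp
  also have "\<dots> \<le> KS * L2norm \<Omega> (\<lambda>x. udag x - uin h k x)" using S_bound[OF dL] .
  also have "\<dots> \<le> KS * (2 * M)" using mult_left_mono[OF Uad_diff_bound[OF udag_sol uU] KS_nonneg] .
  finally show ?thesis .
qed

lemma D_src:
  assumes h: "0 < h" "h \<le> hmax" and k: "k \<ge> 1"
  shows "D h k \<le> inner (\<sigma> h k) (w - W h k) + KS * \<epsilon> k * norm (w - W h k) + 2 * M * (1 + KS) * \<delta> h * gammaB \<alpha> k"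
proof -
  have vL: "v h k \<in> L2 \<Omega>" using v_L2 h by simp
  have a: "D h k \<le> L2inner \<Omega> (Sstar w) (v h k) - L2inner \<Omega> (lam h k) (v h k)"
    unfolding D_def v_def using h by (intro D_src_gen udagL p_L2 lam_L2 Sstar_L2 src_VI p_U)
  have b: "L2inner \<Omega> (Sstar w) (v h k) = inner (S (v h k)) w" using S_adj'[OF vL] by (simp add: ip_sym)
  have c: "- L2inner \<Omega> (lam h k) (v h k) \<le> - (gammaB \<alpha> k * inner (S (v h k)) r + inner (S (v h k)) (W h k)) + (1 + KS) * \<delta> h * L2norm \<Omega> (v h k) * gammaB \<alpha> k"
    using lam_inner[OF h vL, of k] sum_split[where k=k and y="S (v h k)" and h=h] by (simp add: abs_le_iff)
  have d: "0 \<le> gammaB \<alpha> k * inner (S (v h k)) r" using Sv_r[OF h(1)] gamma_nonneg by simp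
  have e: "(1 + KS) * \<delta> h * L2norm \<Omega> (v h k) * gammaB \<alpha> k \<le> (1 + KS) * \<delta> h * (2 * M) * gammaB \<alpha> k"
    using v_bound[OF h(1)] KS_nonneg \<delta>_nonneg[of h] h gamma_nonneg
    by (intro mult_right_mono mult_left_mono) auto
  have f: "inner (S (uin h k) - S (p h k)) (w - W h k) \<le> KS * \<epsilon> k * norm (w - W h k)"
    using norm_cauchy_schwarz[of "S (uin h k) - S (p h k)" "w - W h k"] mult_right_mono[OF Se_bound[OF h k] norm_ge_zero[of "w - W h k"]]
    by linarith
  have "D h k \<le> inner (S (v h k)) (w - W h k) + (1 + KS) * \<delta> h * (2 * M) * gammaB \<alpha> k"
    using a b c d e by (simp add: inner_diff_right)
  also have "inner (S (v h k)) (w - W h k) = inner (\<sigma> h k) (w - W h k) + inner (S (uin h k) - S (p h k)) (w - W h k)"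
    by (simp add: Sv_decomp[OF h k] inner_add_left)
  finally show ?thesis using f by (simp add: algebra_simps)
qed

lemma D_rec:
  assumes h: "0 < h" "h \<le> hmax"
  shows "D h (Suc k) \<le> D h k + t (Suc k) * (2 * M * KS * KS * \<epsilon> (Suc k) + (1 + KS) * \<delta> h * (2 * M))"
proof -
  let ?v = "v h (Suc k)" and ?u = "uin h (Suc k)"
  have k: "Suc k \<ge> 1" by simp
  have vL: "?v \<in> L2 \<Omega>" using v_L2 h by simp
  have tp: "0 < t (Suc k)" using t_pos by simp
  have de: "L2inner \<Omega> (Shstar h (z - Sh h ?u)) ?v \<ge> inner (S ?v) (z - S ?u) - (1 + KS) * \<delta> h * L2norm \<Omega> ?v"
    using disc_est[OF h(1) algU[OF h k] vL] by (simp add: abs_le_iff)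
  have e1: "(1 + KS) * \<delta> h * L2norm \<Omega> ?v \<le> (1 + KS) * \<delta> h * (2 * M)"
    using v_bound[OF h(1)] KS_nonneg \<delta>_nonneg[of h] h by (intro mult_left_mono) auto
  have zs: "z - S ?u = r + \<sigma> h (Suc k)" by (simp add: r_def \<sigma>_def)
  have i1: "inner (S ?v) (z - S ?u) = inner (S ?v) r + inner (S ?v) (\<sigma> h (Suc k))"
    by (simp add: zs inner_add_right)
  have i2: "inner (S ?v) (\<sigma> h (Suc k)) = (norm (\<sigma> h (Suc k)))\<^sup>2 + inner (S ?u - S (p h (Suc k))) (\<sigma> h (Suc k))"
    by (simp add: Sv_decomp[OF h k] inner_add_left power2_norm_eq_inner)
  have i3: "- inner (S ?u - S (p h (Suc k))) (\<sigma> h (Suc k)) \<le> (KS * \<epsilon> (Suc k)) * (KS * (2 * M))"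
    using Cauchy_Schwarz_ineq2[of "S ?u - S (p h (Suc k))" "\<sigma> h (Suc k)"]
      mult_mono[OF Se_bound[OF h k] sigma_bound[OF h k] mult_nonneg_nonneg[OF KS_nonneg less_imp_le[OF \<epsilon>_pos[OF k]]] norm_ge_zero]
    by linarith
  have "L2inner \<Omega> (Shstar h (z - Sh h ?u)) ?v \<ge> - (2 * M * KS * KS * \<epsilon> (Suc k) + (1 + KS) * \<delta> h * (2 * M))"
  proof -
    have eq: "(KS * \<epsilon> (Suc k)) * (KS * (2 * M)) = 2 * M * KS * KS * \<epsilon> (Suc k)" by simp
    show ?thesis using de e1 i1 i2 i3 eq Sv_r[OF h(1), of "Suc k"] zero_le_power2[of "norm (\<sigma> h (Suc k))"]
      by linarith
  qed
  then have "- t (Suc k) * L2inner \<Omega> (Shstar h (z - Sh h ?u)) ?v \<le> t (Suc k) * (2 * M * KS * KS * \<epsilon> (Suc k) + (1 + KS) * \<delta> h * (2 * M))"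
    using mult_left_mono[OF _ less_imp_le[OF tp]] by (metis minus_le_iff mult_minus_left mult_minus_right)
  then show ?thesis using D_rec0[OF h(1), of k] by simp
qed

definition Fq :: "real \<Rightarrow> nat \<Rightarrow> real" where
  "Fq h k = gammaB \<alpha> k * D h k + (1/2) * (norm (w - W h k))\<^sup>2"

lemma F_0: "Fq h 0 = (1/2) * (norm w)\<^sup>2" by (simp add: Fq_def gamma_0 W_0)

lemma D_nonneg: "h > 0 \<Longrightarrow> 0 \<le> D h k"
  using D_lower[of h k] zero_le_power2[of "L2norm \<Omega> (v h k)"] by linarith

lemma F_rec:
  assumes h: "0 < h" "h \<le> hmax"
  shows "Fq h (Suc k) \<le> Fq h k
     + gammaB \<alpha> k * t (Suc k) * (2 * M * KS * KS * \<epsilon> (Suc k) + (1 + KS) * \<delta> h * (2 * M))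
     + t (Suc k) * KS * \<epsilon> (Suc k) * norm (w - W h (Suc k))
     + t (Suc k) * gammaB \<alpha> (Suc k) * (2 * M * (1 + KS) * \<delta> h)"
proof -
  let ?g = "gammaB \<alpha> k" and ?t = "t (Suc k)" and ?x = "w - W h (Suc k)"
  have tp: "0 < ?t" using t_pos by simp
  have g0: "0 \<le> ?g" by (rule gamma_nonneg)
  have 1: "?g * D h (Suc k) \<le> ?g * D h k + ?g * ?t * (2 * M * KS * KS * \<epsilon> (Suc k) + (1 + KS) * \<delta> h * (2 * M))"
    using mult_left_mono[OF D_rec[OF h, of k] g0] by (simp add: algebra_simps)
  have 2: "?t * D h (Suc k) \<le> ?t * (inner (\<sigma> h (Suc k)) ?x + KS * \<epsilon> (Suc k) * norm ?x + 2 * M * (1 + KS) * \<delta> h * gammaB \<alpha> (Suc k))"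
    using mult_left_mono[OF D_src[OF h, of "Suc k"] less_imp_le[OF tp]] by simp
  have 3: "inner (?t *\<^sub>R \<sigma> h (Suc k)) ?x + (1/2) * (norm ?x)\<^sup>2 \<le> (1/2) * (norm (w - W h k))\<^sup>2"
    using Y_ident[of "?t *\<^sub>R \<sigma> h (Suc k)" ?x] by (simp add: W_Suc)
  show ?thesis
    using 1 2 3 unfolding Fq_def gamma_Suc by (simp add: algebra_simps)
qed

end


lemma gronwall:
  fixes F x a b :: "nat \<Rightarrow> real"
  assumes rec: "\<And>k. F (Suc k) \<le> F k + a (Suc k) * x (Suc k) + b (Suc k)"
    and xF: "\<And>k. (x k)\<^sup>2 \<le> 2 * F k" and x0: "\<And>k. 0 \<le> x k"
    and a0: "\<And>k. 0 \<le> a k" and b0: "\<And>k. 0 \<le> b k"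
  shows "F K \<le> (F 0 + (\<Sum>k=1..K. b k)) + (\<Sum>k=1..K. a k) * (2 * (\<Sum>k=1..K. a k) + sqrt (2 * (F 0 + (\<Sum>k=1..K. b k))))"
proof -
  define BB where "BB = F 0 + (\<Sum>k=1..K. b k)"
  define AA where "AA = (\<Sum>k=1..K. a k)"
  define X where "X = Max (x ` {0..K})"
  have i: "F j \<le> F 0 + (\<Sum>k=1..j. a k * x k + b k)" for j
  proof (induction j)
    case (Suc j)
    then show ?case using rec[of j] by simp
  qed simp
  have xX: "x j \<le> X" if "j \<le> K" for j unfolding X_def using that by (intro Max_ge) auto
  have X0: "0 \<le> X" using xX[of 0] x0[of 0] by simp
  have AA0: "0 \<le> AA" unfolding AA_def using a0 by (simp add: sum_nonneg)
  have F00: "0 \<le> F 0" using xF[of 0] zero_le_power2[of "x 0"] by linarith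
  have BB0: "0 \<le> BB" unfolding BB_def using F00 b0 by (simp add: sum_nonneg)
  have Fj: "F j \<le> BB + AA * X" if j: "j \<le> K" for j
  proof -
    have s1: "(\<Sum>k=1..j. a k * x k + b k) = (\<Sum>k=1..j. a k * x k) + (\<Sum>k=1..j. b k)" by (simp add: sum.distrib)
    have s2: "(\<Sum>k=1..j. a k * x k) \<le> (\<Sum>k=1..j. a k * X)"
      using j by (intro sum_mono mult_left_mono xX a0) auto
    have s3: "(\<Sum>k=1..j. a k * X) = (\<Sum>k=1..j. a k) * X" by (simp add: sum_distrib_right)
    have s4: "(\<Sum>k=1..j. a k) \<le> AA" unfolding AA_def using j a0 by (intro sum_mono2) auto
    have s5: "(\<Sum>k=1..j. b k) \<le> (\<Sum>k=1..K. b k)" using j b0 by (intro sum_mono2) auto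
    have s6: "(\<Sum>k=1..j. a k) * X \<le> AA * X" using mult_right_mono[OF s4 X0] .
    show ?thesis using i[of j] s1 s2 s3 s5 s6 unfolding BB_def by linarith
  qed
  have "X \<in> x ` {0..K}" unfolding X_def by (rule Max_in) auto
  then obtain j0 where j0: "j0 \<le> K" "X = x j0" by auto
  have X2: "X\<^sup>2 \<le> 2 * BB + 2 * AA * X" using xF[of j0] Fj[OF j0(1)] j0(2) by simp
  have XB: "X \<le> 2 * AA + sqrt (2 * BB)"
  proof (rule ccontr)
    assume "\<not> ?thesis"
    then have c: "X > 2 * AA + sqrt (2 * BB)" by simp
    have s: "0 \<le> sqrt (2 * BB)" using BB0 by simp
    have p1: "X - 2 * AA > sqrt (2 * BB)" using c by simp
    have "X * (X - 2 * AA) > (2 * AA + sqrt (2 * BB)) * sqrt (2 * BB)"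
    proof -
      have "(2 * AA + sqrt (2 * BB)) * sqrt (2 * BB) \<le> X * sqrt (2 * BB)"
        using c s by (simp add: mult_right_mono)
      also have "\<dots> < X * (X - 2 * AA)" using mult_strict_left_mono[OF p1, of X] c s AA0 by linarith
      finally show ?thesis .
    qed
    moreover have "(2 * AA + sqrt (2 * BB)) * sqrt (2 * BB) = 2 * AA * sqrt (2 * BB) + 2 * BB"
      using BB0 by (simp add: algebra_simps)
    moreover have "0 \<le> 2 * AA * sqrt (2 * BB)" using AA0 s by simp
    moreover have "X * (X - 2 * AA) = X\<^sup>2 - 2 * AA * X" by (simp add: power2_eq_square algebra_simps)
    ultimately show False using X2 by linarith
  qed
  have "F K \<le> BB + AA * X" using Fj by simp
  also have "\<dots> \<le> BB + AA * (2 * AA + sqrt (2 * BB))" using XB AA0 by (simp add: mult_left_mono)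
  finally show ?thesis unfolding AA_def BB_def .
qed



context bset begin

definition Rterm :: "nat \<Rightarrow> real" where
  "Rterm j = (let i = Suc j in
        \<epsilon> i / \<alpha> i + (\<epsilon> i)\<^sup>2 / (\<alpha> i)\<^sup>2 + gammaB \<alpha> (i - 1) * \<epsilon> i / \<alpha> i + (\<epsilon> i)\<^sup>2 / \<alpha> i)"

lemma R_summable: "summable Rterm" using R_sum unfolding Rterm_def .

definition Rt :: real where "Rt = suminf Rterm"

lemma Rterm_ge: "\<epsilon> (Suc j) / \<alpha> (Suc j) \<le> Rterm j \<and> gammaB \<alpha> j * \<epsilon> (Suc j) / \<alpha> (Suc j) \<le> Rterm j \<and> 0 \<le> Rterm j"
proof -
  have a: "0 < \<alpha> (Suc j)" "0 < \<epsilon> (Suc j)" using \<alpha>_pos \<epsilon>_pos by auto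
  have p1: "0 \<le> \<epsilon> (Suc j) / \<alpha> (Suc j)" using a by simp
  have p2: "0 \<le> (\<epsilon> (Suc j))\<^sup>2 / (\<alpha> (Suc j))\<^sup>2" by simp
  have p3: "0 \<le> gammaB \<alpha> j * \<epsilon> (Suc j) / \<alpha> (Suc j)" using a gamma_nonneg[of j] by simp
  have p4: "0 \<le> (\<epsilon> (Suc j))\<^sup>2 / \<alpha> (Suc j)" using a by simp
  show ?thesis using p1 p2 p3 p4 unfolding Rterm_def Let_def by simp
qed

lemma Rterm_nonneg: "0 \<le> Rterm j" using Rterm_ge by blast

lemma sum_R_le: "(\<Sum>j<K. Rterm j) \<le> Rt"
  unfolding Rt_def using R_summable Rterm_nonneg by (intro sum_le_suminf) auto

lemma sum_te_le: "(\<Sum>k=1..K. t k * \<epsilon> k) \<le> Rt"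
proof -
  have "(\<Sum>k=1..K. t k * \<epsilon> k) = (\<Sum>j<K. t (Suc j) * \<epsilon> (Suc j))"
    using sum.atLeast1_atMost_eq[of "\<lambda>k. t k * \<epsilon> k" K] by simp
  also have "\<dots> \<le> (\<Sum>j<K. Rterm j)" using Rterm_ge by (intro sum_mono) (simp add: t_def)
  finally show ?thesis using sum_R_le[of K] by linarith
qed

lemma sum_gte_le: "(\<Sum>k=1..K. gammaB \<alpha> (k - 1) * t k * \<epsilon> k) \<le> Rt"
proof -
  have "(\<Sum>k=1..K. gammaB \<alpha> (k - 1) * t k * \<epsilon> k) = (\<Sum>j<K. gammaB \<alpha> j * t (Suc j) * \<epsilon> (Suc j))"
    using sum.atLeast1_atMost_eq[of "\<lambda>k. gammaB \<alpha> (k - 1) * t k * \<epsilon> k" K] by simp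
  also have "\<dots> \<le> (\<Sum>j<K. Rterm j)" using Rterm_ge by (intro sum_mono) (simp add: t_def)
  finally show ?thesis using sum_R_le[of K] by linarith
qed

lemma Rt_nonneg: "0 \<le> Rt" using sum_R_le[of 0] by simp

definition Gk :: "nat \<Rightarrow> real" where "Gk K = (\<Sum>k=1..K. t k * gammaB \<alpha> k)"

lemma gamma_mono_Suc: "gammaB \<alpha> k \<le> gammaB \<alpha> (Suc k)"
  using gamma_Suc[of k] t_pos[of "Suc k"] by simp

lemma Gk_nonneg: "0 \<le> Gk K"
  unfolding Gk_def using t_pos gamma_nonneg by (intro sum_nonneg mult_nonneg_nonneg) (auto simp: less_imp_le)

definition aa :: "nat \<Rightarrow> real" where "aa k = (if k = 0 then 0 else t k * KS * \<epsilon> k)"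
definition bb :: "real \<Rightarrow> nat \<Rightarrow> real" where
  "bb h k = (if k = 0 then 0 else
     gammaB \<alpha> (k - 1) * t k * (2 * M * KS * KS * \<epsilon> k + (1 + KS) * \<delta> h * (2 * M))
     + t k * gammaB \<alpha> k * (2 * M * (1 + KS) * \<delta> h))"

lemma aa_nonneg: "0 \<le> aa k"
  unfolding aa_def using t_pos \<epsilon>_pos KS_nonneg by (auto intro!: mult_nonneg_nonneg simp: less_imp_le)

lemma bb_nonneg: "0 < h \<Longrightarrow> 0 \<le> bb h k"
  unfolding bb_def using t_pos \<epsilon>_pos KS_nonneg M_nonneg \<delta>_nonneg[of h] gamma_nonneg
  by (auto intro!: add_nonneg_nonneg mult_nonneg_nonneg simp: less_imp_le)

definition B1 :: "real \<Rightarrow> real" where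
  "B1 s = (1/2) * (norm w)\<^sup>2 + 2 * M * KS * KS * Rt + 4 * M * (1 + KS) * s"
definition A1 :: real where "A1 = KS * Rt"
definition Fmax :: "real \<Rightarrow> real" where "Fmax s = B1 s + A1 * (2 * A1 + sqrt (2 * B1 s))"

lemma F_bound1:
  assumes h: "0 < h" "h \<le> hmax"
  shows "Fq h K \<le> (Fq h 0 + (\<Sum>k=1..K. bb h k)) + (\<Sum>k=1..K. aa k) * (2 * (\<Sum>k=1..K. aa k) + sqrt (2 * (Fq h 0 + (\<Sum>k=1..K. bb h k))))"
proof (rule gronwall[where x = "\<lambda>k. norm (w - W h k)"])
  fix k
  show "Fq h (Suc k) \<le> Fq h k + aa (Suc k) * norm (w - W h (Suc k)) + bb h (Suc k)"
    using F_rec[OF h, of k] unfolding aa_def bb_def by simp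
  show "(norm (w - W h k))\<^sup>2 \<le> 2 * Fq h k"
    unfolding Fq_def using mult_nonneg_nonneg[OF gamma_nonneg D_nonneg[OF h(1)]] by simp
qed (auto simp: aa_nonneg bb_nonneg h)

lemma sum_aa: "(\<Sum>k=1..K. aa k) \<le> A1"
proof -
  have "(\<Sum>k=1..K. aa k) = KS * (\<Sum>k=1..K. t k * \<epsilon> k)"
    by (simp add: aa_def sum_distrib_left algebra_simps)
  also have "\<dots> \<le> KS * Rt" by (intro mult_left_mono sum_te_le KS_nonneg)
  finally show ?thesis by (simp add: A1_def)
qed

lemma sum_bb:
  assumes h: "0 < h" "h \<le> hmax" and s: "\<delta> h * Gk K \<le> s"
  shows "(\<Sum>k=1..K. bb h k) \<le> 2 * M * KS * KS * Rt + 4 * M * (1 + KS) * s"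
proof -
  have e: "bb h k \<le> 2 * M * KS * KS * (gammaB \<alpha> (k - 1) * t k * \<epsilon> k) + 4 * M * (1 + KS) * \<delta> h * (t k * gammaB \<alpha> k)"
    if k: "k \<in> {1..K}" for k
  proof -
    have k1: "k \<ge> 1" using k by simp
    have gm: "gammaB \<alpha> (k - 1) \<le> gammaB \<alpha> k" using gamma_mono_Suc[of "k - 1"] k1 by simp
    have c: "0 \<le> t k * ((1 + KS) * \<delta> h * (2 * M))"
      using t_pos[OF k1] KS_nonneg M_nonneg \<delta>_nonneg[of h] h by (intro mult_nonneg_nonneg) auto
    have "gammaB \<alpha> (k - 1) * (t k * ((1 + KS) * \<delta> h * (2 * M))) \<le> gammaB \<alpha> k * (t k * ((1 + KS) * \<delta> h * (2 * M)))"
      using mult_right_mono[OF gm c] .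
    then show ?thesis using k1 unfolding bb_def by (simp add: algebra_simps)
  qed
  have "(\<Sum>k=1..K. bb h k) \<le> (\<Sum>k=1..K. 2 * M * KS * KS * (gammaB \<alpha> (k - 1) * t k * \<epsilon> k) + 4 * M * (1 + KS) * \<delta> h * (t k * gammaB \<alpha> k))"
    using e by (intro sum_mono) auto
  also have "\<dots> = 2 * M * KS * KS * (\<Sum>k=1..K. gammaB \<alpha> (k - 1) * t k * \<epsilon> k) + 4 * M * (1 + KS) * (\<delta> h * Gk K)"
    by (simp add: sum.distrib sum_distrib_left Gk_def algebra_simps)
  also have "\<dots> \<le> 2 * M * KS * KS * Rt + 4 * M * (1 + KS) * s"
    using M_nonneg KS_nonneg s sum_gte_le[of K]
    by (intro add_mono mult_left_mono) auto
  finally show ?thesis .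
qed

lemma gamma_pos: "K \<ge> 1 \<Longrightarrow> 0 < gammaB \<alpha> K"
  using gamma_Suc[of "K - 1"] t_pos[of K] gamma_nonneg[of "K - 1"] by simp

lemma main_bound:
  assumes h: "0 < h" "h \<le> hmax" and K: "K \<ge> 1" and s: "\<delta> h * Gk K \<le> s"
  shows "L2norm \<Omega> (\<lambda>x. uin h K x - udag x) \<le> \<epsilon> K + sqrt (2 * Fmax s / gammaB \<alpha> K)"
proof -
  define AA where "AA = (\<Sum>k=1..K. aa k)"
  define BB where "BB = Fq h 0 + (\<Sum>k=1..K. bb h k)"
  have AA0: "0 \<le> AA" unfolding AA_def using aa_nonneg by (simp add: sum_nonneg)
  have BB0: "0 \<le> BB" unfolding BB_def F_0 using bb_nonneg[OF h(1)] by (simp add: sum_nonneg)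
  have AA1: "AA \<le> A1" unfolding AA_def by (rule sum_aa)
  have BB1: "BB \<le> B1 s" unfolding BB_def F_0 B1_def using sum_bb[OF h s] by simp
  have "Fq h K \<le> BB + AA * (2 * AA + sqrt (2 * BB))" using F_bound1[OF h, of K] unfolding AA_def BB_def .
  also have "\<dots> \<le> B1 s + A1 * (2 * A1 + sqrt (2 * B1 s))"
  proof -
    have "sqrt (2 * BB) \<le> sqrt (2 * B1 s)" using BB1 by simp
    then have "2 * AA + sqrt (2 * BB) \<le> 2 * A1 + sqrt (2 * B1 s)" using AA1 by linarith
    moreover have "0 \<le> 2 * AA + sqrt (2 * BB)" using AA0 BB0 by simp
    ultimately have "AA * (2 * AA + sqrt (2 * BB)) \<le> A1 * (2 * A1 + sqrt (2 * B1 s))"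
      using AA0 AA1 by (intro mult_mono) auto
    then show ?thesis using BB1 by simp
  qed
  finally have FK: "Fq h K \<le> Fmax s" unfolding Fmax_def .
  have gp: "0 < gammaB \<alpha> K" using gamma_pos[OF K] .
  have "gammaB \<alpha> K * D h K \<le> Fq h K" unfolding Fq_def by simp
  moreover have "gammaB \<alpha> K * ((1/2) * (L2norm \<Omega> (v h K))\<^sup>2) \<le> gammaB \<alpha> K * D h K"
    using D_lower[OF h(1), of K] gp by (intro mult_left_mono) auto
  ultimately have "gammaB \<alpha> K * (L2norm \<Omega> (v h K))\<^sup>2 \<le> 2 * Fmax s" using FK by linarith
  then have "(L2norm \<Omega> (v h K))\<^sup>2 \<le> 2 * Fmax s / gammaB \<alpha> K" using gp by (simp add: field_simps)
  then have nv: "L2norm \<Omega> (v h K) \<le> sqrt (2 * Fmax s / gammaB \<alpha> K)"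
    using norm_nonneg real_le_rsqrt by blast
  have uL: "uin h K \<in> L2 \<Omega>" using UadL[OF algU[OF h K]] .
  have pL: "p h K \<in> L2 \<Omega>" by (rule p_L2) (rule h(1))
  have "L2norm \<Omega> (\<lambda>x. uin h K x - udag x) \<le> L2norm \<Omega> (\<lambda>x. uin h K x - p h K x) + L2norm \<Omega> (\<lambda>x. p h K x - udag x)"
    by (rule norm_triangle_diff[OF uL pL udagL])
  moreover have "L2norm \<Omega> (\<lambda>x. p h K x - udag x) = L2norm \<Omega> (v h K)"
    unfolding L2norm_def v_def by (simp add: power2_commute)
  ultimately show ?thesis using u_p_close[OF h K] nv by linarith
qed

end


theorem corollary4p4:
  fixes \<Omega> :: "'n::euclidean_space set"
    and S :: "('n \<Rightarrow> real) \<Rightarrow> 'y::{real_inner, complete_space}"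
    and Sstar :: "'y \<Rightarrow> ('n \<Rightarrow> real)"
    and Sh :: "real \<Rightarrow> ('n \<Rightarrow> real) \<Rightarrow> 'y"
    and Shstar :: "real \<Rightarrow> 'y \<Rightarrow> ('n \<Rightarrow> real)"
    and z :: 'y and ua ub udag :: "'n \<Rightarrow> real" and w :: 'y
    and \<delta> :: "real \<Rightarrow> real"
    and \<alpha> \<epsilon> :: "nat \<Rightarrow> real" and hmax :: real
    and uin :: "real \<Rightarrow> nat \<Rightarrow> ('n \<Rightarrow> real)"
  assumes \<Omega>_bounded: "bounded \<Omega>" and \<Omega>_meas: "\<Omega> \<in> sets lebesgue"
    and S_lin: "bounded_linear_L2 \<Omega> S" and S_adj: "is_adjoint_L2 \<Omega> S Sstar"
    and ua: "ua \<in> Linfty \<Omega>" and ub: "ub \<in> Linfty \<Omega>"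
    and uab: "AE x in lebesgue_on \<Omega>. ua x \<le> ub x"
    and Sh_lin: "\<And>h. h > 0 \<Longrightarrow> bounded_linear_L2 \<Omega> (Sh h)"
    and Sh_adj: "\<And>h. h > 0 \<Longrightarrow> is_adjoint_L2 \<Omega> (Sh h) (Shstar h)"
    and Sh_fin: "\<And>h. h > 0 \<Longrightarrow> \<exists>B. finite B \<and> Sh h ` L2 \<Omega> \<subseteq> span B"
    and \<delta>_cont: "continuous_on {0..} \<delta>" and \<delta>_mono: "mono_on {0..} \<delta>"
    and \<delta>_0: "\<delta> 0 = 0" and \<delta>_nonneg: "\<And>h. h \<ge> 0 \<Longrightarrow> \<delta> h \<ge> 0"
    and \<delta>_est: "\<And>h u. h > 0 \<Longrightarrow> u \<in> Uad \<Omega> ua ub \<Longrightarrow>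
        norm (S u - Sh h u) + L2norm \<Omega> (\<lambda>x. Sstar (Sh h u - z) x - Shstar h (Sh h u - z) x) \<le> \<delta> h"
    and \<alpha>_pos: "\<And>k. k \<ge> 1 \<Longrightarrow> \<alpha> k > 0"
    and \<alpha>_bdd: "\<exists>B. \<forall>k\<ge>1. \<alpha> k \<le> B"
    and udag_sol: "udag \<in> Uad \<Omega> ua ub"
    and udag_min: "\<And>u. u \<in> Uad \<Omega> ua ub \<Longrightarrow>
        (1/2) * (norm (S udag - z))\<^sup>2 \<le> (1/2) * (norm (S u - z))\<^sup>2"
    and source: "AE x in lebesgue_on \<Omega>. udag x = projU \<Omega> ua ub (Sstar w) x"
    and \<epsilon>_pos: "\<And>k. k \<ge> 1 \<Longrightarrow> \<epsilon> k > 0"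
    and R_sum: "summable (\<lambda>j. let i = Suc j in
        \<epsilon> i / \<alpha> i + (\<epsilon> i)\<^sup>2 / (\<alpha> i)\<^sup>2 + gammaB \<alpha> (i - 1) * \<epsilon> i / \<alpha> i + (\<epsilon> i)\<^sup>2 / \<alpha> i)"
    and hmax_pos: "hmax > 0"
    and alg0: "\<And>h. 0 < h \<Longrightarrow> h \<le> hmax \<Longrightarrow> uin h 0 = projU \<Omega> ua ub (\<lambda>x. 0)"
    and algU: "\<And>h k. 0 < h \<Longrightarrow> h \<le> hmax \<Longrightarrow> k \<ge> 1 \<Longrightarrow> uin h k \<in> Uad \<Omega> ua ub"
    and algB: "\<And>h k. 0 < h \<Longrightarrow> h \<le> hmax \<Longrightarrow> k \<ge> 1 \<Longrightarrow>
        breg \<Omega> ua ub (Sh h) (Shstar h) z (\<alpha> k) (lamB \<alpha> (Sh h) (Shstar h) z (uin h) (k - 1)) (uin h k)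
          \<le> \<epsilon> k"
  shows "\<exists>C. \<exists>kh :: real \<Rightarrow> nat.
     (\<forall>h. 0 < h \<and> h \<le> hmax \<longrightarrow>
        (\<Sum>i=1..kh h. \<delta> h * (rhoB \<alpha> i / \<alpha> i + gammaB \<alpha> (i - 1) / \<alpha> i
                                + gammaB \<alpha> (i - 1) * rhoB \<alpha> i / \<alpha> i)
                      + (\<delta> h)\<^sup>2 * ((rhoB \<alpha> i)\<^sup>2 / (\<alpha> i)\<^sup>2 + (rhoB \<alpha> i)\<^sup>2 / \<alpha> i)) \<le> C)
     \<and> filterlim kh at_top (at_right 0)
     \<and> ((\<lambda>h. L2norm \<Omega> (\<lambda>x. uin h (kh h) x - udag x)) \<longlongrightarrow> 0) (at_right 0)"
proof -
  interpret bset \<Omega> S Sstar Sh Shstar z ua ub udag w \<delta> \<alpha> \<epsilon> hmax uin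
    by (rule bset.intro; fact)
  define Hc where "Hc i = rhoB \<alpha> i / \<alpha> i + gammaB \<alpha> (i - 1) / \<alpha> i + gammaB \<alpha> (i - 1) * rhoB \<alpha> i / \<alpha> i" for i
  define Hd where "Hd i = (rhoB \<alpha> i)\<^sup>2 / (\<alpha> i)\<^sup>2 + (rhoB \<alpha> i)\<^sup>2 / \<alpha> i" for i
  define \<Gamma> where "\<Gamma> K = (\<Sum>i=1..K. Hc i) + (\<Sum>i=1..K. Hd i) + Gk K" for K
  define kh where "kh h = Max {k. k \<le> nat \<lfloor>1/h\<rfloor> \<and> \<delta> h * \<Gamma> k \<le> sqrt (\<delta> h)}" for h
  define C where "C = sqrt (\<delta> hmax) * (1 + \<delta> hmax)"
  have Hc0: "0 \<le> Hc i" if "i \<ge> 1" for i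
    using \<alpha>_pos[OF that] gamma_nonneg[of "i - 1"] unfolding Hc_def rhoB_def by (simp add: add_nonneg_nonneg)
  have Hd0: "0 \<le> Hd i" if "i \<ge> 1" for i
    using \<alpha>_pos[OF that] unfolding Hd_def by simp
  have sHc: "0 \<le> (\<Sum>i=1..K. Hc i)" for K using Hc0 by (intro sum_nonneg) auto
  have sHd: "0 \<le> (\<Sum>i=1..K. Hd i)" for K using Hd0 by (intro sum_nonneg) auto
  have \<Gamma>0: "0 \<le> \<Gamma> K" for K using sHc sHd Gk_nonneg unfolding \<Gamma>_def by (simp add: add_nonneg_nonneg)
  have \<delta>mono: "\<delta> h \<le> \<delta> hmax" if "0 < h" "h \<le> hmax" for h
    using \<delta>_mono that unfolding mono_on_def by auto
  have dh0: "0 \<le> \<delta> hmax" using \<delta>_nonneg hmax_pos by simp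
  have kh_in: "kh h \<le> nat \<lfloor>1/h\<rfloor> \<and> \<delta> h * \<Gamma> (kh h) \<le> sqrt (\<delta> h)" if h: "0 < h" for h
  proof -
    let ?A = "{k. k \<le> nat \<lfloor>1/h\<rfloor> \<and> \<delta> h * \<Gamma> k \<le> sqrt (\<delta> h)}"
    have fin: "finite ?A" by (rule finite_subset[of _ "{..nat \<lfloor>1/h\<rfloor>}"]) auto
    have "0 \<in> ?A" using \<delta>_nonneg[of h] h by (simp add: \<Gamma>_def Gk_def)
    then have "kh h \<in> ?A" unfolding kh_def using fin by (intro Max_in) auto
    then show ?thesis by simp
  qed
  have kh_ge: "N \<le> kh h" if h: "0 < h" and N: "N \<le> nat \<lfloor>1/h\<rfloor>" "\<delta> h * \<Gamma> N \<le> sqrt (\<delta> h)" for h N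
  proof -
    let ?A = "{k. k \<le> nat \<lfloor>1/h\<rfloor> \<and> \<delta> h * \<Gamma> k \<le> sqrt (\<delta> h)}"
    have fin: "finite ?A" by (rule finite_subset[of _ "{..nat \<lfloor>1/h\<rfloor>}"]) auto
    show ?thesis unfolding kh_def using fin N by (intro Max_ge) auto
  qed
  have \<delta>lim: "(\<delta> \<longlongrightarrow> 0) (at_right 0)"
  proof -
    have "(\<delta> \<longlongrightarrow> \<delta> 0) (at 0 within {0..})" using \<delta>_cont unfolding continuous_on_def by simp
    then have "(\<delta> \<longlongrightarrow> \<delta> 0) (at 0 within {0<..})" by (rule tendsto_within_subset) auto
    then show ?thesis using \<delta>_0 by simp
  qed
  have ev_small: "eventually (\<lambda>h. 0 < h \<and> h < b) (at_right 0)" if "0 < b" for b :: real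
    unfolding eventually_at_right_field using that by auto
  have kh_lim: "filterlim kh at_top (at_right 0)"
    unfolding filterlim_at_top
  proof
    fix N :: nat
    define c where "c = 1 / (\<Gamma> N + 1)"
    have c0: "0 < c" using \<Gamma>0[of N] by (simp add: c_def)
    have e1: "eventually (\<lambda>h. \<delta> h < c\<^sup>2) (at_right 0)"
      using order_tendstoD(2)[OF \<delta>lim, of "c\<^sup>2"] c0 by simp
    have e2: "eventually (\<lambda>h. 0 < h \<and> h < 1 / (real N + 1)) (at_right 0)" by (rule ev_small) simp
    show "eventually (\<lambda>h. N \<le> kh h) (at_right 0)"
      using e1 e2
    proof eventually_elim
      case (elim h)
      then have h0: "0 < h" by simp
      have "real N + 1 < 1 / h" using elim by (simp add: field_simps)
      then have N1: "N \<le> nat \<lfloor>1/h\<rfloor>" by linarith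
      have d0: "0 \<le> \<delta> h" using \<delta>_nonneg h0 by simp
      have sq: "sqrt (\<delta> h) < c" using elim c0 by (metis abs_of_pos real_sqrt_abs real_sqrt_less_mono)
      have "sqrt (\<delta> h) * \<Gamma> N \<le> 1"
      proof -
        have "sqrt (\<delta> h) * \<Gamma> N \<le> c * \<Gamma> N" using sq \<Gamma>0[of N] by (intro mult_right_mono) auto
        also have "\<dots> \<le> 1" using \<Gamma>0[of N] by (simp add: c_def field_simps)
        finally show ?thesis .
      qed
      then have "sqrt (\<delta> h) * (sqrt (\<delta> h) * \<Gamma> N) \<le> sqrt (\<delta> h)" using d0
        by (metis mult_left_mono mult.right_neutral real_sqrt_ge_zero)
      then have N2: "\<delta> h * \<Gamma> N \<le> sqrt (\<delta> h)" using d0 by (simp add: mult.assoc[symmetric])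
      show ?case by (rule kh_ge[OF h0 N1 N2])
    qed
  qed
  have Hsum: "(\<Sum>i=1..kh h. \<delta> h * (rhoB \<alpha> i / \<alpha> i + gammaB \<alpha> (i - 1) / \<alpha> i
                                + gammaB \<alpha> (i - 1) * rhoB \<alpha> i / \<alpha> i)
                      + (\<delta> h)\<^sup>2 * ((rhoB \<alpha> i)\<^sup>2 / (\<alpha> i)\<^sup>2 + (rhoB \<alpha> i)\<^sup>2 / \<alpha> i)) \<le> C"
    if h: "0 < h \<and> h \<le> hmax" for h
  proof -
    let ?K = "kh h"
    have d0: "0 \<le> \<delta> h" using \<delta>_nonneg h by simp
    have dm: "\<delta> h \<le> \<delta> hmax" using \<delta>mono h by simp
    have k: "\<delta> h * \<Gamma> ?K \<le> sqrt (\<delta> h)" using kh_in h by simp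
    have "(\<Sum>i=1..?K. \<delta> h * (rhoB \<alpha> i / \<alpha> i + gammaB \<alpha> (i - 1) / \<alpha> i
                                + gammaB \<alpha> (i - 1) * rhoB \<alpha> i / \<alpha> i)
                      + (\<delta> h)\<^sup>2 * ((rhoB \<alpha> i)\<^sup>2 / (\<alpha> i)\<^sup>2 + (rhoB \<alpha> i)\<^sup>2 / \<alpha> i))
       = (\<Sum>i=1..?K. \<delta> h * Hc i + \<delta> h * (\<delta> h * Hd i))"
      by (intro sum.cong) (simp_all add: Hc_def Hd_def power2_eq_square)
    also have "\<dots> = \<delta> h * (\<Sum>i=1..?K. Hc i) + \<delta> h * (\<delta> h * (\<Sum>i=1..?K. Hd i))"
      by (simp add: sum.distrib sum_distrib_left)
    finally have eq: "(\<Sum>i=1..?K. \<delta> h * (rhoB \<alpha> i / \<alpha> i + gammaB \<alpha> (i - 1) / \<alpha> i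
                                + gammaB \<alpha> (i - 1) * rhoB \<alpha> i / \<alpha> i)
                      + (\<delta> h)\<^sup>2 * ((rhoB \<alpha> i)\<^sup>2 / (\<alpha> i)\<^sup>2 + (rhoB \<alpha> i)\<^sup>2 / \<alpha> i))
       = \<delta> h * (\<Sum>i=1..?K. Hc i) + \<delta> h * (\<delta> h * (\<Sum>i=1..?K. Hd i))" .
    have a1: "\<delta> h * (\<Sum>i=1..?K. Hc i) \<le> \<delta> h * \<Gamma> ?K"
      using sHd[of ?K] Gk_nonneg[of ?K] d0 unfolding \<Gamma>_def by (intro mult_left_mono) auto
    have a2: "\<delta> h * (\<Sum>i=1..?K. Hd i) \<le> \<delta> h * \<Gamma> ?K"
      using sHc[of ?K] Gk_nonneg[of ?K] d0 unfolding \<Gamma>_def by (intro mult_left_mono) auto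
    have a3: "\<delta> h * (\<delta> h * (\<Sum>i=1..?K. Hd i)) \<le> \<delta> hmax * sqrt (\<delta> h)"
      using a2 k d0 dm by (meson mult_mono order_trans mult_nonneg_nonneg sHd)
    have sq: "sqrt (\<delta> h) \<le> sqrt (\<delta> hmax)" using dm by simp
    have "\<delta> h * (\<Sum>i=1..?K. Hc i) + \<delta> h * (\<delta> h * (\<Sum>i=1..?K. Hd i)) \<le> sqrt (\<delta> h) + \<delta> hmax * sqrt (\<delta> h)"
      using a1 a3 k by linarith
    also have "\<dots> \<le> sqrt (\<delta> hmax) + \<delta> hmax * sqrt (\<delta> hmax)"
      using sq dh0 by (intro add_mono mult_left_mono) auto
    also have "\<dots> = C" by (simp add: C_def algebra_simps)
    finally show ?thesis using eq by simp
  qed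
  obtain B where B: "\<forall>k\<ge>1. \<alpha> k \<le> B" using \<alpha>_bdd by blast
  have Bpos: "0 < B" using B \<alpha>_pos[of 1] by force
  define s0 where "s0 = sqrt (\<delta> hmax)"
  define bnd where "bnd K = \<epsilon> K + sqrt (2 * Fmax s0 * B / real K)" for K
  have Fm0: "0 \<le> Fmax s0"
  proof -
    have "0 \<le> B1 s0" unfolding B1_def s0_def
      using M_nonneg KS_nonneg Rt_nonneg dh0 by (intro add_nonneg_nonneg mult_nonneg_nonneg) auto
    moreover have "0 \<le> A1" unfolding A1_def using KS_nonneg Rt_nonneg by simp
    ultimately show ?thesis unfolding Fmax_def by (intro add_nonneg_nonneg mult_nonneg_nonneg) auto
  qed
  have gam_lb: "real K / B \<le> gammaB \<alpha> K" for K
  proof -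
    have "real K / B = (\<Sum>k=1..K. 1 / B)" by simp
    also have "\<dots> \<le> (\<Sum>k=1..K. 1 / \<alpha> k)"
      using B \<alpha>_pos Bpos by (intro sum_mono) (auto intro!: divide_left_mono)
    finally show ?thesis by (simp add: gammaB_def)
  qed
  have bnd_ok: "L2norm \<Omega> (\<lambda>x. uin h (kh h) x - udag x) \<le> bnd (kh h)"
    if h: "0 < h" "h \<le> hmax" and K: "kh h \<ge> 1" for h
  proof -
    let ?K = "kh h"
    have d0: "0 \<le> \<delta> h" using \<delta>_nonneg h by simp
    have "\<delta> h * Gk ?K \<le> \<delta> h * \<Gamma> ?K"
      using sHc[of ?K] sHd[of ?K] d0 unfolding \<Gamma>_def by (intro mult_left_mono) auto
    also have "\<dots> \<le> sqrt (\<delta> h)" using kh_in h by simp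
    also have "\<dots> \<le> s0" unfolding s0_def using \<delta>mono[OF h] by simp
    finally have s: "\<delta> h * Gk ?K \<le> s0" .
    have "L2norm \<Omega> (\<lambda>x. uin h ?K x - udag x) \<le> \<epsilon> ?K + sqrt (2 * Fmax s0 / gammaB \<alpha> ?K)"
      by (rule main_bound[OF h K s])
    also have "2 * Fmax s0 / gammaB \<alpha> ?K \<le> 2 * Fmax s0 * B / real ?K"
    proof -
      have kp: "0 < real ?K / B" using K Bpos by simp
      have "2 * Fmax s0 / gammaB \<alpha> ?K \<le> 2 * Fmax s0 / (real ?K / B)"
        using gam_lb[of ?K] kp Fm0 gamma_pos[OF K] by (intro divide_left_mono mult_pos_pos) auto
      then show ?thesis using Bpos by simp
    qed
    finally show ?thesis unfolding bnd_def by simp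
  qed
  have eps_lim: "\<epsilon> \<longlonglongrightarrow> 0"
  proof -
    have R0: "Rterm \<longlonglongrightarrow> 0" by (rule summable_LIMSEQ_zero[OF R_summable])
    have "(\<lambda>j. \<epsilon> (Suc j)) \<longlonglongrightarrow> 0"
    proof (rule tendsto_sandwich[of "\<lambda>_. 0" _ _ "\<lambda>j. B * Rterm j"])
      show "\<forall>\<^sub>F j in sequentially. 0 \<le> \<epsilon> (Suc j)" using \<epsilon>_pos by (simp add: less_imp_le)
      show "\<forall>\<^sub>F j in sequentially. \<epsilon> (Suc j) \<le> B * Rterm j"
      proof (intro always_eventually allI)
        fix j
        have ap: "0 < \<alpha> (Suc j)" using \<alpha>_pos by simp
        have "\<epsilon> (Suc j) = \<alpha> (Suc j) * (\<epsilon> (Suc j) / \<alpha> (Suc j))" using ap by simp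
        also have "\<dots> \<le> B * (\<epsilon> (Suc j) / \<alpha> (Suc j))"
          using B ap \<epsilon>_pos[of "Suc j"] by (intro mult_right_mono) auto
        also have "\<dots> \<le> B * Rterm j" using Rterm_ge[of j] Bpos by (intro mult_left_mono) auto
        finally show "\<epsilon> (Suc j) \<le> B * Rterm j" .
      qed
      show "(\<lambda>j. B * Rterm j) \<longlonglongrightarrow> 0" using tendsto_mult_right_zero[OF R0, of B] by (simp add: mult.commute)
    qed simp
    then show ?thesis by (simp add: filterlim_sequentially_Suc)
  qed
  have bnd_lim: "bnd \<longlonglongrightarrow> 0"
  proof -
    have "(\<lambda>K. 2 * Fmax s0 * B / real K) \<longlonglongrightarrow> 0" by (rule lim_const_over_n)
    then have "(\<lambda>K. sqrt (2 * Fmax s0 * B / real K)) \<longlonglongrightarrow> sqrt 0" by (rule tendsto_real_sqrt)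
    then show ?thesis unfolding bnd_def using tendsto_add[OF eps_lim] by fastforce
  qed
  have lim: "((\<lambda>h. L2norm \<Omega> (\<lambda>x. uin h (kh h) x - udag x)) \<longlongrightarrow> 0) (at_right 0)"
  proof (rule tendsto_sandwich[of "\<lambda>_. 0" _ _ "\<lambda>h. bnd (kh h)"])
    show "\<forall>\<^sub>F h in at_right 0. 0 \<le> L2norm \<Omega> (\<lambda>x. uin h (kh h) x - udag x)"
      by (simp add: norm_nonneg)
    have e1: "\<forall>\<^sub>F h in at_right 0. 1 \<le> kh h" using kh_lim unfolding filterlim_at_top by blast
    have e2: "\<forall>\<^sub>F h in at_right 0. 0 < h \<and> h < hmax" using ev_small[OF hmax_pos] .
    show "\<forall>\<^sub>F h in at_right 0. L2norm \<Omega> (\<lambda>x. uin h (kh h) x - udag x) \<le> bnd (kh h)"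
      using e1 e2 by eventually_elim (auto intro: bnd_ok)
    show "((\<lambda>h. bnd (kh h)) \<longlongrightarrow> 0) (at_right 0)"
      by (rule filterlim_compose[OF bnd_lim kh_lim])
  qed simp
  show ?thesis using Hsum kh_lim lim by blast
qed


end
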